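(* Let $X$ be a set with exactly four elements and let $B_X$ be the monoid of binary relations on $X$. For every field $k$, the monoid algebra $kB_X$ is of infinite representation type.
   Context: The monoid of binary relations $B_X$ on a set $X$ consists of all subsets of $X\times X$, with multiplication given by composition of relations: $(R S) = \{(x,z): \exists y\in X,\ (x,y)\in R,\ (y,z)\in S\}$; the identity is the diagonal relation. A finite-dimensional $k$-algebra is of infinite representation type if it has infinitely many isomorphism classes of finite-dimensional indecomposable modules. *)

theory Defs
  imports Main "Jordan_Normal_Form.Matrix"
begin

text \<open>Binary relations on a (finite) type 'x; the monoid B_X has multiplication
  relcomp (O) and identity Id.\<close>
type_synonym 'x brel = "('x \<times> 'x) set"

text \<open>The monoid algebra k B_X: functions B_X -> k (finite support is automatic as
  the type 'x is finite), with pointwise addition / scalar multiplication and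
  convolution product.\<close>
type_synonym ('x, 'k) malg = "'x brel \<Rightarrow> 'k"

definition malg_add :: "('x, 'k::field) malg \<Rightarrow> ('x, 'k) malg \<Rightarrow> ('x, 'k) malg" where
  "malg_add a b = (\<lambda>T. a T + b T)"

definition malg_smult :: "'k::field \<Rightarrow> ('x, 'k) malg \<Rightarrow> ('x, 'k) malg" where
  "malg_smult c a = (\<lambda>T. c * a T)"

definition malg_mult :: "('x::finite, 'k::field) malg \<Rightarrow> ('x, 'k) malg \<Rightarrow> ('x, 'k) malg" where
  "malg_mult a b = (\<lambda>T. \<Sum>p\<in>{(R, S). R O S = T}. a (fst p) * b (snd p))"

definition malg_one :: "('x, 'k::field) malg" where
  "malg_one = (\<lambda>T. if T = Id then 1 else 0)"

text \<open>A finite-dimensional (left) module over k B_X of dimension n, written in a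
  basis: a unital k-algebra homomorphism k B_X -> M_n(k).\<close>
definition is_rep :: "nat \<Rightarrow> (('x::finite, 'k::field) malg \<Rightarrow> 'k mat) \<Rightarrow> bool" where
  "is_rep n \<rho> \<longleftrightarrow>
     (\<forall>a. \<rho> a \<in> carrier_mat n n) \<and>
     (\<forall>a b. \<rho> (malg_add a b) = \<rho> a + \<rho> b) \<and>
     (\<forall>c a. \<rho> (malg_smult c a) = c \<cdot>\<^sub>m \<rho> a) \<and>
     (\<forall>a b. \<rho> (malg_mult a b) = \<rho> a * \<rho> b) \<and>
     \<rho> malg_one = 1\<^sub>m n"

definition rep_iso :: "nat \<Rightarrow> (('x::finite, 'k::field) malg \<Rightarrow> 'k mat)
    \<Rightarrow> nat \<Rightarrow> (('x, 'k) malg \<Rightarrow> 'k mat) \<Rightarrow> bool" where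
  "rep_iso n \<rho> m \<sigma> \<longleftrightarrow> n = m \<and>
     (\<exists>P \<in> carrier_mat n n. invertible_mat P \<and> (\<forall>a. P * \<rho> a = \<sigma> a * P))"

definition rep_dsum :: "nat \<Rightarrow> (('x::finite, 'k::field) malg \<Rightarrow> 'k mat)
    \<Rightarrow> nat \<Rightarrow> (('x, 'k) malg \<Rightarrow> 'k mat) \<Rightarrow> (('x, 'k) malg \<Rightarrow> 'k mat)" where
  "rep_dsum n1 \<rho>1 n2 \<rho>2 =
     (\<lambda>a. four_block_mat (\<rho>1 a) (0\<^sub>m n1 n2) (0\<^sub>m n2 n1) (\<rho>2 a))"

definition indecomposable :: "nat \<Rightarrow> (('x::finite, 'k::field) malg \<Rightarrow> 'k mat) \<Rightarrow> bool" where
  "indecomposable n \<rho> \<longleftrightarrow> is_rep n \<rho> \<and> n > 0 \<and>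
     \<not> (\<exists>n1 n2 \<rho>1 \<rho>2. n1 > 0 \<and> n2 > 0 \<and> is_rep n1 \<rho>1 \<and> is_rep n2 \<rho>2 \<and>
            rep_iso n \<rho> (n1 + n2) (rep_dsum n1 \<rho>1 n2 \<rho>2))"

definition indec_reps :: "(nat \<times> (('x::finite, 'k::field) malg \<Rightarrow> 'k mat)) set" where
  "indec_reps = {(n, \<rho>). indecomposable n \<rho>}"

definition iso_rel :: "((nat \<times> (('x::finite, 'k::field) malg \<Rightarrow> 'k mat)) \<times>
                        (nat \<times> (('x, 'k) malg \<Rightarrow> 'k mat))) set" where
  "iso_rel = {((n, \<rho>), (m, \<sigma>)). rep_iso n \<rho> m \<sigma>}"

definition infinite_rep_type :: "'x::finite itself \<Rightarrow> 'k::field itself \<Rightarrow> bool" where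
  "infinite_rep_type _ _ \<longleftrightarrow>
     infinite ((indec_reps :: (nat \<times> (('x, 'k) malg \<Rightarrow> 'k mat)) set) // iso_rel)"

end

theory Submission
  imports Defs
begin

definition permr :: "('x \<times> 'x) set \<Rightarrow> bool" where
  "permr R \<longleftrightarrow> (\<forall>x. \<exists>!y. (x,y)\<in>R) \<and> (\<forall>y. \<exists>!x. (x,y)\<in>R)"

lemma permrI:
  assumes "\<And>x. \<exists>y. (x,y)\<in>R" "\<And>x y y'. (x,y)\<in>R \<Longrightarrow> (x,y')\<in>R \<Longrightarrow> y = y'"
    "\<And>y. \<exists>x. (x,y)\<in>R" "\<And>x x' y. (x,y)\<in>R \<Longrightarrow> (x',y)\<in>R \<Longrightarrow> x = x'"
  shows "permr R"
  unfolding permr_def using assms by (meson ex1I)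

lemma permrD:
  assumes "permr R"
  shows "\<exists>y. (x,y)\<in>R" "(x,y)\<in>R \<Longrightarrow> (x,y')\<in>R \<Longrightarrow> y = y'"
    "\<exists>x. (x,y)\<in>R" "(x,y)\<in>R \<Longrightarrow> (x',y)\<in>R \<Longrightarrow> x = x'"
  using assms unfolding permr_def by blast+

lemma permr_Id: "permr Id" by (rule permrI) auto

lemma permr_comp:
  assumes R: "permr R" and S: "permr S" shows "permr (R O S)"
proof (rule permrI)
  fix x
  obtain y where "(x,y)\<in>R" using permrD(1)[OF R] by blast
  moreover obtain z where "(y,z)\<in>S" using permrD(1)[OF S] by blast
  ultimately show "\<exists>z. (x,z) \<in> R O S" by blast
next
  fix x z z' assume "(x,z) \<in> R O S" "(x,z') \<in> R O S"
  then obtain y y' where "(x,y)\<in>R" "(y,z)\<in>S" "(x,y')\<in>R" "(y',z')\<in>S" by blast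
  then show "z = z'" using permrD(2)[OF R] permrD(2)[OF S] by metis
next
  fix z
  obtain y where "(y,z)\<in>S" using permrD(3)[OF S] by blast
  moreover obtain x where "(x,y)\<in>R" using permrD(3)[OF R] by blast
  ultimately show "\<exists>x. (x,z) \<in> R O S" by blast
next
  fix x x' z assume "(x,z) \<in> R O S" "(x',z) \<in> R O S"
  then obtain y y' where "(x,y)\<in>R" "(y,z)\<in>S" "(x',y')\<in>R" "(y',z)\<in>S" by blast
  then show "x = x'" using permrD(4)[OF R] permrD(4)[OF S] by metis
qed

lemma permr_conv: "permr R \<Longrightarrow> permr (R\<inverse>)"
  unfolding permr_def by auto

lemma permr_conv_comp: "permr R \<Longrightarrow> R\<inverse> O R = Id"
  using permrD[of R] by blast

lemma permr_comp_conv: "permr R \<Longrightarrow> R O R\<inverse> = Id"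
  using permrD[of R] by blast

lemma permr_factor:
  fixes R S :: "('x::finite \<times> 'x) set"
  assumes p: "permr (R O S)"
  shows "permr R \<and> permr S"
proof -
  define pi where "pi x = (SOME y. (x,y) \<in> R O S)" for x
  have pi1: "(x, pi x) \<in> R O S" for x
    unfolding pi_def using permrD(1)[OF p] by (rule someI_ex)
  have pi: "(x,y) \<in> R O S \<longleftrightarrow> y = pi x" for x y
    using pi1 permrD(2)[OF p] by blast
  have piinj: "pi x = pi x' \<Longrightarrow> x = x'" for x x'
    using pi1 permrD(4)[OF p] by metis
  define j where "j x = (SOME k. (x,k) \<in> R \<and> (k, pi x) \<in> S)" for x
  have j: "(x, j x) \<in> R \<and> (j x, pi x) \<in> S" for x
  proof -
    have "\<exists>k. (x,k) \<in> R \<and> (k, pi x) \<in> S" using pi1[of x] by blast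
    then show ?thesis unfolding j_def by (rule someI_ex)
  qed
  have jinj: "inj j"
  proof (rule injI)
    fix x y assume "j x = j y"
    then have "(y, pi x) \<in> R O S" using j by (metis relcompI)
    then have "pi x = pi y" using pi by simp
    then show "x = y" using piinj by blast
  qed
  then have jsurj: "surj j" using finite_UNIV_inj_surj[OF finite_UNIV] by blast
  have Srow: "(j x, z) \<in> S \<longleftrightarrow> z = pi x" for x z
  proof
    assume "(j x, z) \<in> S"
    then have "(x,z) \<in> R O S" using j by blast
    then show "z = pi x" using pi by simp
  qed (use j in simp)
  have Rrow: "(x, k) \<in> R \<longleftrightarrow> k = j x" for x k
  proof
    assume xk: "(x,k) \<in> R"
    obtain y where y: "k = j y" using jsurj by (metis surjD)
    then have "(x, pi y) \<in> R O S" using j xk by blast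
    then have "pi y = pi x" using pi by simp
    then have "y = x" using piinj by blast
    then show "k = j x" using y by simp
  qed (use j in simp)
  have "permr R"
  proof (rule permrI)
    show "\<exists>y. (x, y) \<in> R" for x using Rrow by blast
    show "y = y'" if "(x, y) \<in> R" "(x, y') \<in> R" for x y y' using Rrow[of x y] Rrow[of x y'] that by simp
    show "\<exists>x. (x, y) \<in> R" for y
    proof -
      obtain x where "y = j x" using jsurj by (metis surjD)
      then show ?thesis using Rrow by blast
    qed
    show "x = x'" if "(x, y) \<in> R" "(x', y) \<in> R" for x x' y
      using that Rrow jinj by (metis injD)
  qed
  moreover have "permr S"
  proof (rule permrI)
    show "\<exists>z. (k, z) \<in> S" for k
    proof -
      obtain x where "k = j x" using jsurj by (metis surjD)
      then show ?thesis using Srow by blast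
    qed
    show "z = z'" if "(k, z) \<in> S" "(k, z') \<in> S" for k z z'
    proof -
      obtain x where "k = j x" using jsurj by (metis surjD)
      then show ?thesis using Srow[of x z] Srow[of x z'] that by simp
    qed
    show "\<exists>k. (k, z) \<in> S" for z
    proof -
      obtain x where "(x, z) \<in> R O S" using permrD(3)[OF p] by blast
      then have "z = pi x" using pi by simp
      then show ?thesis using Srow by blast
    qed
    show "k = k'" if "(k, z) \<in> S" "(k', z) \<in> S" for k k' z
    proof -
      obtain x where x: "k = j x" using jsurj by (metis surjD)
      obtain x' where x': "k' = j x'" using jsurj by (metis surjD)
      have "z = pi x" "z = pi x'" using Srow[of x z] Srow[of x' z] that x x' by simp_all
      then have "x = x'" using piinj by simp
      then show ?thesis using x x' by simp
    qed
  qed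
  ultimately show ?thesis by blast
qed
definition orb :: "('x \<times> 'x) set \<Rightarrow> ('x \<times> 'x) set set" where
  "orb P = {T. \<exists>s t. permr s \<and> permr t \<and> T = s O P O t}"

lemma orbI: "permr s \<Longrightarrow> permr t \<Longrightarrow> T = s O P O t \<Longrightarrow> T \<in> orb P"
  unfolding orb_def by blast

lemma orbE: "T \<in> orb P \<Longrightarrow> (\<And>s t. permr s \<Longrightarrow> permr t \<Longrightarrow> T = s O P O t \<Longrightarrow> thesis) \<Longrightarrow> thesis"
  unfolding orb_def by blast

lemma orb_self: "P \<in> orb P"
  by (rule orbI[OF permr_Id permr_Id]) simp

lemma orb_left: "permr s \<Longrightarrow> T \<in> orb P \<Longrightarrow> s O T \<in> orb P"
proof -
  assume s: "permr s" and T: "T \<in> orb P"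
  from T obtain s' t where "permr s'" "permr t" "T = s' O P O t" by (rule orbE)
  then show ?thesis using s by (intro orbI[of "s O s'" t]) (simp_all add: permr_comp O_assoc)
qed

lemma orb_right: "permr s \<Longrightarrow> T \<in> orb P \<Longrightarrow> T O s \<in> orb P"
proof -
  assume s: "permr s" and T: "T \<in> orb P"
  from T obtain s' t where "permr s'" "permr t" "T = s' O P O t" by (rule orbE)
  then show ?thesis using s by (intro orbI[of s' "t O s"]) (simp_all add: permr_comp O_assoc)
qed

lemma orb_inv: "T \<in> orb P \<Longrightarrow> P \<in> orb T"
proof -
  assume "T \<in> orb P"
  then obtain s t where st: "permr s" "permr t" "T = s O P O t" by (rule orbE)
  have "s\<inverse> O T O t\<inverse> = (s\<inverse> O s) O P O (t O t\<inverse>)"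
    using st by (simp add: O_assoc)
  also have "\<dots> = P" using st by (simp add: permr_conv_comp permr_comp_conv)
  finally show ?thesis using st by (intro orbI[of "s\<inverse>" "t\<inverse>"]) (simp_all add: permr_conv)
qed

lemma orb_trans: "T \<in> orb P \<Longrightarrow> P \<in> orb Q \<Longrightarrow> T \<in> orb Q"
proof -
  assume "T \<in> orb P" "P \<in> orb Q"
  then obtain s t s' t' where "permr s" "permr t" "T = s O P O t" "permr s'" "permr t'" "P = s' O Q O t'"
    by (metis orbE)
  then show ?thesis by (intro orbI[of "s O s'" "t' O t"]) (simp_all add: O_assoc permr_comp)
qed

lemma orb_not_perm:
  fixes P :: "('x::finite \<times> 'x) set"
  assumes "\<not> permr P" "T \<in> orb P" shows "\<not> permr T"
proof
  assume "permr T"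
  from orb_inv[OF assms(2)] obtain s t where "permr s" "permr t" "P = s O T O t"
    by (rule orbE)
  then show False using assms(1) \<open>permr T\<close> by (simp add: permr_comp)
qed

lemma orb_prod:
  fixes P :: "('x::finite \<times> 'x) set"
  assumes prime: "\<And>R S. R O S = P \<Longrightarrow> permr R \<or> permr S"
  shows "R O S \<in> orb P \<longleftrightarrow> (permr R \<and> S \<in> orb P) \<or> (R \<in> orb P \<and> permr S)"
proof
  assume RS: "R O S \<in> orb P"
  show "(permr R \<and> S \<in> orb P) \<or> (R \<in> orb P \<and> permr S)"
  proof (cases "permr R")
    case True
    have "R\<inverse> O (R O S) = S" using True by (simp add: O_assoc[symmetric] permr_conv_comp)
    then have "S \<in> orb P" using orb_left[OF permr_conv[OF True] RS] by simp
    then show ?thesis using True by blast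
  next
    case nR: False
    show ?thesis
    proof (cases "permr S")
      case True
      have "(R O S) O S\<inverse> = R" using True by (simp add: O_assoc permr_comp_conv)
      then have "R \<in> orb P" using orb_right[OF permr_conv[OF True] RS] by simp
      then show ?thesis using True by blast
    next
      case nS: False
      from orb_inv[OF RS] obtain s t where st: "permr s" "permr t" "P = s O (R O S) O t"
        by (rule orbE)
      then have "(s O R) O (S O t) = P" by (simp add: O_assoc)
      from prime[OF this] have "permr (s O R) \<or> permr (S O t)" .
      then show ?thesis
      proof
        assume "permr (s O R)"
        then have "permr (s\<inverse> O (s O R))" using st permr_conv permr_comp by blast
        then have "permr R" using st by (simp add: O_assoc[symmetric] permr_conv_comp)
        then show ?thesis using nR by blast
      next
        assume "permr (S O t)"
        then have "permr ((S O t) O t\<inverse>)" using st permr_conv permr_comp by blast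
        then have "permr S" using st by (simp add: O_assoc permr_comp_conv)
        then show ?thesis using nS by blast
      qed
    qed
  qed
next
  assume "(permr R \<and> S \<in> orb P) \<or> (R \<in> orb P \<and> permr S)"
  then show "R O S \<in> orb P" using orb_left orb_right by blast
qed

lemma orb_disj: "(\<And>s t. permr s \<Longrightarrow> permr t \<Longrightarrow> s O Q O t \<noteq> P) \<Longrightarrow> orb P \<inter> orb Q = {}"
proof (rule ccontr)
  assume h: "\<And>s t. permr s \<Longrightarrow> permr t \<Longrightarrow> s O Q O t \<noteq> P" and "orb P \<inter> orb Q \<noteq> {}"
  then obtain T where "T \<in> orb P" "T \<in> orb Q" by blast
  then have "P \<in> orb Q" using orb_inv orb_trans by blast
  then obtain s t where "permr s" "permr t" "P = s O Q O t" by (rule orbE)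
  then show False using h by metis
qed

definition perm4 :: "('x \<times> 'x) set \<Rightarrow> 'x \<Rightarrow> 'x \<Rightarrow> 'x \<Rightarrow> 'x \<Rightarrow> bool" where
  "perm4 S a b c d \<longleftrightarrow> ((((a,a) \<in> S \<and> (a,b) \<notin> S \<and> (a,c) \<notin> S \<and> (a,d) \<notin> S) \<or> ((a,a) \<notin> S \<and> (a,b) \<in> S \<and> (a,c) \<notin> S \<and> (a,d) \<notin> S) \<or> ((a,a) \<notin> S \<and> (a,b) \<notin> S \<and> (a,c) \<in> S \<and> (a,d) \<notin> S) \<or> ((a,a) \<notin> S \<and> (a,b) \<notin> S \<and> (a,c) \<notin> S \<and> (a,d) \<in> S)) \<and> (((b,a) \<in> S \<and> (b,b) \<notin> S \<and> (b,c) \<notin> S \<and> (b,d) \<notin> S) \<or> ((b,a) \<notin> S \<and> (b,b) \<in> S \<and> (b,c) \<notin> S \<and> (b,d) \<notin> S) \<or> ((b,a) \<notin> S \<and> (b,b) \<notin> S \<and> (b,c) \<in> S \<and> (b,d) \<notin> S) \<or> ((b,a) \<notin> S \<and> (b,b) \<notin> S \<and> (b,c) \<notin> S \<and> (b,d) \<in> S)) \<and> (((c,a) \<in> S \<and> (c,b) \<notin> S \<and> (c,c) \<notin> S \<and> (c,d) \<notin> S) \<or> ((c,a) \<notin> S \<and> (c,b) \<in> S \<and> (c,c) \<notin> S \<and> (c,d) \<notin> S) \<or> ((c,a) \<notin> S \<and> (c,b) \<notin> S \<and> (c,c) \<in> S \<and> (c,d) \<notin> S) \<or> ((c,a) \<notin>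 S \<and> (c,b) \<notin> S \<and> (c,c) \<notin> S \<and> (c,d) \<in> S)) \<and> (((d,a) \<in> S \<and> (d,b) \<notin> S \<and> (d,c) \<notin> S \<and> (d,d) \<notin> S) \<or> ((d,a) \<notin> S \<and> (d,b) \<in> S \<and> (d,c) \<notin> S \<and> (d,d) \<notin> S) \<or> ((d,a) \<notin> S \<and> (d,b) \<notin> S \<and> (d,c) \<in> S \<and> (d,d) \<notin> S) \<or> ((d,a) \<notin> S \<and> (d,b) \<notin> S \<and> (d,c) \<notin> S \<and> (d,d) \<in> S)) \<and> (((a,a) \<in> S \<and> (b,a) \<notin> S \<and> (c,a) \<notin> S \<and> (d,a) \<notin> S) \<or> ((a,a) \<notin> S \<and> (b,a) \<in> S \<and> (c,a) \<notin> S \<and> (d,a) \<notin> S) \<or> ((a,a) \<notin> S \<and> (b,a) \<notin> S \<and> (c,a) \<in> S \<and> (d,a) \<notin> S) \<or> ((a,a) \<notin> S \<and> (b,a) \<notin> S \<and> (c,a) \<notin> S \<and> (d,a) \<in> S)) \<and> (((a,b) \<in> S \<and> (b,b) \<notin> S \<and> (c,b) \<notin> S \<and> (d,b) \<notin> S) \<or> ((a,b) \<notin> S \<and> (b,b) \<in> S \<and> (c,b) \<notin> S \<and> (d,b) \<notin> S) \<or> ((a,b) \<notin> S \<and> (b,b) \<notin> S \<and> (c,b) \<in> S \<and> (d,b) \<notin> S) \<or> ((a,b) \<notin> S \<and> (b,b) \<notin> S \<and> (c,b) \<notin> S \<and> (d,b) \<in> S)) \<and> (((a,c) \<in> S \<and>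 (b,c) \<notin> S \<and> (c,c) \<notin> S \<and> (d,c) \<notin> S) \<or> ((a,c) \<notin> S \<and> (b,c) \<in> S \<and> (c,c) \<notin> S \<and> (d,c) \<notin> S) \<or> ((a,c) \<notin> S \<and> (b,c) \<notin> S \<and> (c,c) \<in> S \<and> (d,c) \<notin> S) \<or> ((a,c) \<notin> S \<and> (b,c) \<notin> S \<and> (c,c) \<notin> S \<and> (d,c) \<in> S)) \<and> (((a,d) \<in> S \<and> (b,d) \<notin> S \<and> (c,d) \<notin> S \<and> (d,d) \<notin> S) \<or> ((a,d) \<notin> S \<and> (b,d) \<in> S \<and> (c,d) \<notin> S \<and> (d,d) \<notin> S) \<or> ((a,d) \<notin> S \<and> (b,d) \<notin> S \<and> (c,d) \<in> S \<and> (d,d) \<notin> S) \<or> ((a,d) \<notin> S \<and> (b,d) \<notin> S \<and> (c,d) \<notin> S \<and> (d,d) \<in> S)))"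
lemma prime_gen3: fixes R S :: "('x \<times> 'x) set" and a b c d :: 'x
  assumes "(((a,a) \<in> R \<and> (a,a) \<in> S) \<or> ((a,b) \<in> R \<and> (b,a) \<in> S) \<or> ((a,c) \<in> R \<and> (c,a) \<in> S) \<or> ((a,d) \<in> R \<and> (d,a) \<in> S))"
   and "(((a,a) \<in> R \<and> (a,b) \<in> S) \<or> ((a,b) \<in> R \<and> (b,b) \<in> S) \<or> ((a,c) \<in> R \<and> (c,b) \<in> S) \<or> ((a,d) \<in> R \<and> (d,b) \<in> S))"
   and "\<not> (((a,a) \<in> R \<and> (a,c) \<in> S) \<or> ((a,b) \<in> R \<and> (b,c) \<in> S) \<or> ((a,c) \<in> R \<and> (c,c) \<in> S) \<or> ((a,d) \<in> R \<and> (d,c) \<in> S))"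
   and "\<not> (((a,a) \<in> R \<and> (a,d) \<in> S) \<or> ((a,b) \<in> R \<and> (b,d) \<in> S) \<or> ((a,c) \<in> R \<and> (c,d) \<in> S) \<or> ((a,d) \<in> R \<and> (d,d) \<in> S))"
   and "(((b,a) \<in> R \<and> (a,a) \<in> S) \<or> ((b,b) \<in> R \<and> (b,a) \<in> S) \<or> ((b,c) \<in> R \<and> (c,a) \<in> S) \<or> ((b,d) \<in> R \<and> (d,a) \<in> S))"
   and "\<not> (((b,a) \<in> R \<and> (a,b) \<in> S) \<or> ((b,b) \<in> R \<and> (b,b) \<in> S) \<or> ((b,c) \<in> R \<and> (c,b) \<in> S) \<or> ((b,d) \<in> R \<and> (d,b) \<in> S))"
   and "(((b,a) \<in> R \<and> (a,c) \<in> S) \<or> ((b,b) \<in> R \<and> (b,c) \<in> S) \<or> ((b,c) \<in> R \<and> (c,c) \<in> S) \<or> ((b,d) \<in> R \<and> (d,c) \<in> S))"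
   and "\<not> (((b,a) \<in> R \<and> (a,d) \<in> S) \<or> ((b,b) \<in> R \<and> (b,d) \<in> S) \<or> ((b,c) \<in> R \<and> (c,d) \<in> S) \<or> ((b,d) \<in> R \<and> (d,d) \<in> S))"
   and "\<not> (((c,a) \<in> R \<and> (a,a) \<in> S) \<or> ((c,b) \<in> R \<and> (b,a) \<in> S) \<or> ((c,c) \<in> R \<and> (c,a) \<in> S) \<or> ((c,d) \<in> R \<and> (d,a) \<in> S))"
   and "(((c,a) \<in> R \<and> (a,b) \<in> S) \<or> ((c,b) \<in> R \<and> (b,b) \<in> S) \<or> ((c,c) \<in> R \<and> (c,b) \<in> S) \<or> ((c,d) \<in> R \<and> (d,b) \<in> S))"
   and "\<not> (((c,a) \<in> R \<and> (a,c) \<in> S) \<or> ((c,b) \<in> R \<and> (b,c) \<in> S) \<or> ((c,c) \<in> R \<and> (c,c) \<in> S) \<or> ((c,d) \<in> R \<and> (d,c) \<in> S))"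
   and "(((c,a) \<in> R \<and> (a,d) \<in> S) \<or> ((c,b) \<in> R \<and> (b,d) \<in> S) \<or> ((c,c) \<in> R \<and> (c,d) \<in> S) \<or> ((c,d) \<in> R \<and> (d,d) \<in> S))"
   and "\<not> (((d,a) \<in> R \<and> (a,a) \<in> S) \<or> ((d,b) \<in> R \<and> (b,a) \<in> S) \<or> ((d,c) \<in> R \<and> (c,a) \<in> S) \<or> ((d,d) \<in> R \<and> (d,a) \<in> S))"
   and "\<not> (((d,a) \<in> R \<and> (a,b) \<in> S) \<or> ((d,b) \<in> R \<and> (b,b) \<in> S) \<or> ((d,c) \<in> R \<and> (c,b) \<in> S) \<or> ((d,d) \<in> R \<and> (d,b) \<in> S))"
   and "(((d,a) \<in> R \<and> (a,c) \<in> S) \<or> ((d,b) \<in> R \<and> (b,c) \<in> S) \<or> ((d,c) \<in> R \<and> (c,c) \<in> S) \<or> ((d,d) \<in> R \<and> (d,c) \<in> S))"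
   and "(((d,a) \<in> R \<and> (a,d) \<in> S) \<or> ((d,b) \<in> R \<and> (b,d) \<in> S) \<or> ((d,c) \<in> R \<and> (c,d) \<in> S) \<or> ((d,d) \<in> R \<and> (d,d) \<in> S))"
  shows "perm4 R a b c d \<or> perm4 S a b c d"
proof -
  have c0: "(((a,a) \<in> S \<and> ((a,c) \<notin> S \<and> (a,d) \<notin> S)) \<or> ((b,a) \<in> S \<and> ((b,c) \<notin> S \<and> (b,d) \<notin> S)) \<or> ((c,a) \<in> S \<and> ((c,c) \<notin> S \<and> (c,d) \<notin> S)) \<or> ((d,a) \<in> S \<and> ((d,c) \<notin> S \<and> (d,d) \<notin> S)))" using assms(1) assms(3) assms(4) by (smt (z3))
  have c1: "(((a,b) \<in> S \<and> ((a,c) \<notin> S \<and> (a,d) \<notin> S)) \<or> ((b,b) \<in> S \<and> ((b,c) \<notin> S \<and> (b,d) \<notin> S)) \<or> ((c,b) \<in> S \<and> ((c,c) \<notin> S \<and> (c,d) \<notin> S)) \<or> ((d,b) \<in> S \<and> ((d,c) \<notin> S \<and> (d,d) \<notin> S)))" using assms(2) assms(3) assms(4) by (smt (z3))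
  have c2: "(((a,a) \<in> S \<and> ((a,b) \<notin> S \<and> (a,d) \<notin> S)) \<or> ((b,a) \<in> S \<and> ((b,b) \<notin> S \<and> (b,d) \<notin> S)) \<or> ((c,a) \<in> S \<and> ((c,b) \<notin> S \<and> (c,d) \<notin> S)) \<or> ((d,a) \<in> S \<and> ((d,b) \<notin> S \<and> (d,d) \<notin> S)))" using assms(5) assms(6) assms(8) by (smt (z3))
  have c3: "(((a,c) \<in> S \<and> ((a,b) \<notin> S \<and> (a,d) \<notin> S)) \<or> ((b,c) \<in> S \<and> ((b,b) \<notin> S \<and> (b,d) \<notin> S)) \<or> ((c,c) \<in> S \<and> ((c,b) \<notin> S \<and> (c,d) \<notin> S)) \<or> ((d,c) \<in> S \<and> ((d,b) \<notin> S \<and> (d,d) \<notin> S)))" using assms(7) assms(6) assms(8) by (smt (z3))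
  have c4: "(((a,b) \<in> S \<and> ((a,a) \<notin> S \<and> (a,c) \<notin> S)) \<or> ((b,b) \<in> S \<and> ((b,a) \<notin> S \<and> (b,c) \<notin> S)) \<or> ((c,b) \<in> S \<and> ((c,a) \<notin> S \<and> (c,c) \<notin> S)) \<or> ((d,b) \<in> S \<and> ((d,a) \<notin> S \<and> (d,c) \<notin> S)))" using assms(10) assms(9) assms(11) by (smt (z3))
  have c5: "(((a,d) \<in> S \<and> ((a,a) \<notin> S \<and> (a,c) \<notin> S)) \<or> ((b,d) \<in> S \<and> ((b,a) \<notin> S \<and> (b,c) \<notin> S)) \<or> ((c,d) \<in> S \<and> ((c,a) \<notin> S \<and> (c,c) \<notin> S)) \<or> ((d,d) \<in> S \<and> ((d,a) \<notin> S \<and> (d,c) \<notin> S)))" using assms(12) assms(9) assms(11) by (smt (z3))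
  have c6: "(((a,c) \<in> S \<and> ((a,a) \<notin> S \<and> (a,b) \<notin> S)) \<or> ((b,c) \<in> S \<and> ((b,a) \<notin> S \<and> (b,b) \<notin> S)) \<or> ((c,c) \<in> S \<and> ((c,a) \<notin> S \<and> (c,b) \<notin> S)) \<or> ((d,c) \<in> S \<and> ((d,a) \<notin> S \<and> (d,b) \<notin> S)))" using assms(15) assms(13) assms(14) by (smt (z3))
  have c7: "(((a,d) \<in> S \<and> ((a,a) \<notin> S \<and> (a,b) \<notin> S)) \<or> ((b,d) \<in> S \<and> ((b,a) \<notin> S \<and> (b,b) \<notin> S)) \<or> ((c,d) \<in> S \<and> ((c,a) \<notin> S \<and> (c,b) \<notin> S)) \<or> ((d,d) \<in> S \<and> ((d,a) \<notin> S \<and> (d,b) \<notin> S)))" using assms(16) assms(13) assms(14) by (smt (z3))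
  have "perm4 S a b c d \<or> ((((a,a) \<in> S \<and> (a,b) \<in> S \<and> (a,c) \<notin> S \<and> (a,d) \<notin> S) \<or> ((b,a) \<in> S \<and> (b,b) \<in> S \<and> (b,c) \<notin> S \<and> (b,d) \<notin> S) \<or> ((c,a) \<in> S \<and> (c,b) \<in> S \<and> (c,c) \<notin> S \<and> (c,d) \<notin> S) \<or> ((d,a) \<in> S \<and> (d,b) \<in> S \<and> (d,c) \<notin> S \<and> (d,d) \<notin> S)) \<and> (((a,a) \<in> S \<and> (a,b) \<notin> S \<and> (a,c) \<in> S \<and> (a,d) \<notin> S) \<or> ((b,a) \<in> S \<and> (b,b) \<notin> S \<and> (b,c) \<in> S \<and> (b,d) \<notin> S) \<or> ((c,a) \<in> S \<and> (c,b) \<notin> S \<and> (c,c) \<in> S \<and> (c,d) \<notin> S) \<or> ((d,a) \<in> S \<and> (d,b) \<notin> S \<and> (d,c) \<in> S \<and> (d,d) \<notin> S)) \<and> (((a,a) \<notin> S \<and> (a,b) \<in> S \<and> (a,c) \<notin> S \<and> (a,d) \<in> S) \<or> ((b,a) \<notin> S \<and> (b,b) \<in> S \<and> (b,c) \<notin> S \<and> (b,d) \<in> S) \<or> ((c,a) \<notin> S \<and> (c,b) \<in> S \<and> (c,c) \<notin> S \<and> (c,d) \<in> S) \<or> ((d,a) \<notin> S \<and> (d,b) \<in> S \<and> (d,c) \<notin> S \<and> (d,d) \<in> S)) \<and> (((a,a) \<notin> S \<and> (a,b) \<notin> S \<and> (a,c) \<in> S \<and> (a,d) \<in> S) \<or>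 ((b,a) \<notin> S \<and> (b,b) \<notin> S \<and> (b,c) \<in> S \<and> (b,d) \<in> S) \<or> ((c,a) \<notin> S \<and> (c,b) \<notin> S \<and> (c,c) \<in> S \<and> (c,d) \<in> S) \<or> ((d,a) \<notin> S \<and> (d,b) \<notin> S \<and> (d,c) \<in> S \<and> (d,d) \<in> S)))"
    unfolding perm4_def using c0 c1 c2 c3 c4 c5 c6 c7 by (smt (z3))
  moreover have "perm4 R a b c d" if "((((a,a) \<in> S \<and> (a,b) \<in> S \<and> (a,c) \<notin> S \<and> (a,d) \<notin> S) \<or> ((b,a) \<in> S \<and> (b,b) \<in> S \<and> (b,c) \<notin> S \<and> (b,d) \<notin> S) \<or> ((c,a) \<in> S \<and> (c,b) \<in> S \<and> (c,c) \<notin> S \<and> (c,d) \<notin> S) \<or> ((d,a) \<in> S \<and> (d,b) \<in> S \<and> (d,c) \<notin> S \<and> (d,d) \<notin> S)) \<and> (((a,a) \<in> S \<and> (a,b) \<notin> S \<and> (a,c) \<in> S \<and> (a,d) \<notin> S) \<or> ((b,a) \<in> S \<and> (b,b) \<notin> S \<and> (b,c) \<in> S \<and> (b,d) \<notin> S) \<or> ((c,a) \<in> S \<and> (c,b) \<notin> S \<and> (c,c) \<in> S \<and> (c,d) \<notin> S) \<or> ((d,a) \<in> S \<and> (d,b) \<notin> S \<and> (d,c) \<in> S \<and> (d,d) \<notin> S)) \<and> (((a,a) \<notin> S \<and> (a,b) \<in> S \<and> (a,c) \<notin> S \<and> (a,d) \<in> S) \<or> ((b,a) \<notin> S \<and>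 (b,b) \<in> S \<and> (b,c) \<notin> S \<and> (b,d) \<in> S) \<or> ((c,a) \<notin> S \<and> (c,b) \<in> S \<and> (c,c) \<notin> S \<and> (c,d) \<in> S) \<or> ((d,a) \<notin> S \<and> (d,b) \<in> S \<and> (d,c) \<notin> S \<and> (d,d) \<in> S)) \<and> (((a,a) \<notin> S \<and> (a,b) \<notin> S \<and> (a,c) \<in> S \<and> (a,d) \<in> S) \<or> ((b,a) \<notin> S \<and> (b,b) \<notin> S \<and> (b,c) \<in> S \<and> (b,d) \<in> S) \<or> ((c,a) \<notin> S \<and> (c,b) \<notin> S \<and> (c,c) \<in> S \<and> (c,d) \<in> S) \<or> ((d,a) \<notin> S \<and> (d,b) \<notin> S \<and> (d,c) \<in> S \<and> (d,d) \<in> S)))"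
    unfolding perm4_def using assms that by (smt (z3))
  ultimately show ?thesis by blast
qed
lemma prime_gen1: fixes R S :: "('x \<times> 'x) set" and a b c d :: 'x
  assumes "(((a,a) \<in> R \<and> (a,a) \<in> S) \<or> ((a,b) \<in> R \<and> (b,a) \<in> S) \<or> ((a,c) \<in> R \<and> (c,a) \<in> S) \<or> ((a,d) \<in> R \<and> (d,a) \<in> S))"
   and "\<not> (((a,a) \<in> R \<and> (a,b) \<in> S) \<or> ((a,b) \<in> R \<and> (b,b) \<in> S) \<or> ((a,c) \<in> R \<and> (c,b) \<in> S) \<or> ((a,d) \<in> R \<and> (d,b) \<in> S))"
   and "\<not> (((a,a) \<in> R \<and> (a,c) \<in> S) \<or> ((a,b) \<in> R \<and> (b,c) \<in> S) \<or> ((a,c) \<in> R \<and> (c,c) \<in> S) \<or> ((a,d) \<in> R \<and> (d,c) \<in> S))"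
   and "\<not> (((a,a) \<in> R \<and> (a,d) \<in> S) \<or> ((a,b) \<in> R \<and> (b,d) \<in> S) \<or> ((a,c) \<in> R \<and> (c,d) \<in> S) \<or> ((a,d) \<in> R \<and> (d,d) \<in> S))"
   and "\<not> (((b,a) \<in> R \<and> (a,a) \<in> S) \<or> ((b,b) \<in> R \<and> (b,a) \<in> S) \<or> ((b,c) \<in> R \<and> (c,a) \<in> S) \<or> ((b,d) \<in> R \<and> (d,a) \<in> S))"
   and "(((b,a) \<in> R \<and> (a,b) \<in> S) \<or> ((b,b) \<in> R \<and> (b,b) \<in> S) \<or> ((b,c) \<in> R \<and> (c,b) \<in> S) \<or> ((b,d) \<in> R \<and> (d,b) \<in> S))"
   and "(((b,a) \<in> R \<and> (a,c) \<in> S) \<or> ((b,b) \<in> R \<and> (b,c) \<in> S) \<or> ((b,c) \<in> R \<and> (c,c) \<in> S) \<or> ((b,d) \<in> R \<and> (d,c) \<in> S))"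
   and "\<not> (((b,a) \<in> R \<and> (a,d) \<in> S) \<or> ((b,b) \<in> R \<and> (b,d) \<in> S) \<or> ((b,c) \<in> R \<and> (c,d) \<in> S) \<or> ((b,d) \<in> R \<and> (d,d) \<in> S))"
   and "\<not> (((c,a) \<in> R \<and> (a,a) \<in> S) \<or> ((c,b) \<in> R \<and> (b,a) \<in> S) \<or> ((c,c) \<in> R \<and> (c,a) \<in> S) \<or> ((c,d) \<in> R \<and> (d,a) \<in> S))"
   and "(((c,a) \<in> R \<and> (a,b) \<in> S) \<or> ((c,b) \<in> R \<and> (b,b) \<in> S) \<or> ((c,c) \<in> R \<and> (c,b) \<in> S) \<or> ((c,d) \<in> R \<and> (d,b) \<in> S))"
   and "\<not> (((c,a) \<in> R \<and> (a,c) \<in> S) \<or> ((c,b) \<in> R \<and> (b,c) \<in> S) \<or> ((c,c) \<in> R \<and> (c,c) \<in> S) \<or> ((c,d) \<in> R \<and> (d,c) \<in> S))"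
   and "(((c,a) \<in> R \<and> (a,d) \<in> S) \<or> ((c,b) \<in> R \<and> (b,d) \<in> S) \<or> ((c,c) \<in> R \<and> (c,d) \<in> S) \<or> ((c,d) \<in> R \<and> (d,d) \<in> S))"
   and "\<not> (((d,a) \<in> R \<and> (a,a) \<in> S) \<or> ((d,b) \<in> R \<and> (b,a) \<in> S) \<or> ((d,c) \<in> R \<and> (c,a) \<in> S) \<or> ((d,d) \<in> R \<and> (d,a) \<in> S))"
   and "\<not> (((d,a) \<in> R \<and> (a,b) \<in> S) \<or> ((d,b) \<in> R \<and> (b,b) \<in> S) \<or> ((d,c) \<in> R \<and> (c,b) \<in> S) \<or> ((d,d) \<in> R \<and> (d,b) \<in> S))"
   and "(((d,a) \<in> R \<and> (a,c) \<in> S) \<or> ((d,b) \<in> R \<and> (b,c) \<in> S) \<or> ((d,c) \<in> R \<and> (c,c) \<in> S) \<or> ((d,d) \<in> R \<and> (d,c) \<in> S))"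
   and "(((d,a) \<in> R \<and> (a,d) \<in> S) \<or> ((d,b) \<in> R \<and> (b,d) \<in> S) \<or> ((d,c) \<in> R \<and> (c,d) \<in> S) \<or> ((d,d) \<in> R \<and> (d,d) \<in> S))"
  shows "perm4 R a b c d \<or> perm4 S a b c d"
proof -
  have c0: "(((a,a) \<in> S \<and> ((a,b) \<notin> S \<and> (a,c) \<notin> S \<and> (a,d) \<notin> S)) \<or> ((b,a) \<in> S \<and> ((b,b) \<notin> S \<and> (b,c) \<notin> S \<and> (b,d) \<notin> S)) \<or> ((c,a) \<in> S \<and> ((c,b) \<notin> S \<and> (c,c) \<notin> S \<and> (c,d) \<notin> S)) \<or> ((d,a) \<in> S \<and> ((d,b) \<notin> S \<and> (d,c) \<notin> S \<and> (d,d) \<notin> S)))" using assms(1) assms(2) assms(3) assms(4) by (smt (z3))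
  have c1: "(((a,b) \<in> S \<and> ((a,a) \<notin> S \<and> (a,d) \<notin> S)) \<or> ((b,b) \<in> S \<and> ((b,a) \<notin> S \<and> (b,d) \<notin> S)) \<or> ((c,b) \<in> S \<and> ((c,a) \<notin> S \<and> (c,d) \<notin> S)) \<or> ((d,b) \<in> S \<and> ((d,a) \<notin> S \<and> (d,d) \<notin> S)))" using assms(6) assms(5) assms(8) by (smt (z3))
  have c2: "(((a,c) \<in> S \<and> ((a,a) \<notin> S \<and> (a,d) \<notin> S)) \<or> ((b,c) \<in> S \<and> ((b,a) \<notin> S \<and> (b,d) \<notin> S)) \<or> ((c,c) \<in> S \<and> ((c,a) \<notin> S \<and> (c,d) \<notin> S)) \<or> ((d,c) \<in> S \<and> ((d,a) \<notin> S \<and> (d,d) \<notin> S)))" using assms(7) assms(5) assms(8) by (smt (z3))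
  have c3: "(((a,b) \<in> S \<and> ((a,a) \<notin> S \<and> (a,c) \<notin> S)) \<or> ((b,b) \<in> S \<and> ((b,a) \<notin> S \<and> (b,c) \<notin> S)) \<or> ((c,b) \<in> S \<and> ((c,a) \<notin> S \<and> (c,c) \<notin> S)) \<or> ((d,b) \<in> S \<and> ((d,a) \<notin> S \<and> (d,c) \<notin> S)))" using assms(10) assms(9) assms(11) by (smt (z3))
  have c4: "(((a,d) \<in> S \<and> ((a,a) \<notin> S \<and> (a,c) \<notin> S)) \<or> ((b,d) \<in> S \<and> ((b,a) \<notin> S \<and> (b,c) \<notin> S)) \<or> ((c,d) \<in> S \<and> ((c,a) \<notin> S \<and> (c,c) \<notin> S)) \<or> ((d,d) \<in> S \<and> ((d,a) \<notin> S \<and> (d,c) \<notin> S)))" using assms(12) assms(9) assms(11) by (smt (z3))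
  have c5: "(((a,c) \<in> S \<and> ((a,a) \<notin> S \<and> (a,b) \<notin> S)) \<or> ((b,c) \<in> S \<and> ((b,a) \<notin> S \<and> (b,b) \<notin> S)) \<or> ((c,c) \<in> S \<and> ((c,a) \<notin> S \<and> (c,b) \<notin> S)) \<or> ((d,c) \<in> S \<and> ((d,a) \<notin> S \<and> (d,b) \<notin> S)))" using assms(15) assms(13) assms(14) by (smt (z3))
  have c6: "(((a,d) \<in> S \<and> ((a,a) \<notin> S \<and> (a,b) \<notin> S)) \<or> ((b,d) \<in> S \<and> ((b,a) \<notin> S \<and> (b,b) \<notin> S)) \<or> ((c,d) \<in> S \<and> ((c,a) \<notin> S \<and> (c,b) \<notin> S)) \<or> ((d,d) \<in> S \<and> ((d,a) \<notin> S \<and> (d,b) \<notin> S)))" using assms(16) assms(13) assms(14) by (smt (z3))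
  have "perm4 S a b c d \<or> ((((a,a) \<in> S \<and> (a,b) \<notin> S \<and> (a,c) \<notin> S \<and> (a,d) \<notin> S) \<or> ((b,a) \<in> S \<and> (b,b) \<notin> S \<and> (b,c) \<notin> S \<and> (b,d) \<notin> S) \<or> ((c,a) \<in> S \<and> (c,b) \<notin> S \<and> (c,c) \<notin> S \<and> (c,d) \<notin> S) \<or> ((d,a) \<in> S \<and> (d,b) \<notin> S \<and> (d,c) \<notin> S \<and> (d,d) \<notin> S)) \<and> (((a,a) \<notin> S \<and> (a,b) \<in> S \<and> (a,c) \<in> S \<and> (a,d) \<notin> S) \<or> ((b,a) \<notin> S \<and> (b,b) \<in> S \<and> (b,c) \<in> S \<and> (b,d) \<notin> S) \<or> ((c,a) \<notin> S \<and> (c,b) \<in> S \<and> (c,c) \<in> S \<and> (c,d) \<notin> S) \<or> ((d,a) \<notin> S \<and> (d,b) \<in> S \<and> (d,c) \<in> S \<and> (d,d) \<notin> S)) \<and> (((a,a) \<notin> S \<and> (a,b) \<in> S \<and> (a,c) \<notin> S \<and> (a,d) \<in> S) \<or> ((b,a) \<notin> S \<and> (b,b) \<in> S \<and> (b,c) \<notin> S \<and> (b,d) \<in> S) \<or> ((c,a) \<notin> S \<and> (c,b) \<in> S \<and> (c,c) \<notin> S \<and> (c,d) \<in> S) \<or> ((d,a) \<notin> S \<and> (d,b) \<in> S \<and> (d,c) \<notin> S \<and> (d,d) \<in> S)) \<and> (((a,a) \<notin> S \<and> (a,b) \<notin> S \<and> (a,c) \<in> S \<and> (a,d) \<in> S)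 \<or> ((b,a) \<notin> S \<and> (b,b) \<notin> S \<and> (b,c) \<in> S \<and> (b,d) \<in> S) \<or> ((c,a) \<notin> S \<and> (c,b) \<notin> S \<and> (c,c) \<in> S \<and> (c,d) \<in> S) \<or> ((d,a) \<notin> S \<and> (d,b) \<notin> S \<and> (d,c) \<in> S \<and> (d,d) \<in> S)))"
    unfolding perm4_def using c0 c1 c2 c3 c4 c5 c6 by (smt (z3))
  moreover have "perm4 R a b c d" if "((((a,a) \<in> S \<and> (a,b) \<notin> S \<and> (a,c) \<notin> S \<and> (a,d) \<notin> S) \<or> ((b,a) \<in> S \<and> (b,b) \<notin> S \<and> (b,c) \<notin> S \<and> (b,d) \<notin> S) \<or> ((c,a) \<in> S \<and> (c,b) \<notin> S \<and> (c,c) \<notin> S \<and> (c,d) \<notin> S) \<or> ((d,a) \<in> S \<and> (d,b) \<notin> S \<and> (d,c) \<notin> S \<and> (d,d) \<notin> S)) \<and> (((a,a) \<notin> S \<and> (a,b) \<in> S \<and> (a,c) \<in> S \<and> (a,d) \<notin> S) \<or> ((b,a) \<notin> S \<and> (b,b) \<in> S \<and> (b,c) \<in> S \<and> (b,d) \<notin> S) \<or> ((c,a) \<notin> S \<and> (c,b) \<in> S \<and> (c,c) \<in> S \<and> (c,d) \<notin> S) \<or> ((d,a) \<notin> S \<and> (d,b) \<in> S \<and> (d,c) \<in> S \<and> (d,d) \<notin> S)) \<and> (((a,a) \<notin> S \<and> (a,b) \<in> S \<and> (a,c) \<notin> S \<and> (a,d) \<in> S) \<or> ((b,a) \<notin>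 S \<and> (b,b) \<in> S \<and> (b,c) \<notin> S \<and> (b,d) \<in> S) \<or> ((c,a) \<notin> S \<and> (c,b) \<in> S \<and> (c,c) \<notin> S \<and> (c,d) \<in> S) \<or> ((d,a) \<notin> S \<and> (d,b) \<in> S \<and> (d,c) \<notin> S \<and> (d,d) \<in> S)) \<and> (((a,a) \<notin> S \<and> (a,b) \<notin> S \<and> (a,c) \<in> S \<and> (a,d) \<in> S) \<or> ((b,a) \<notin> S \<and> (b,b) \<notin> S \<and> (b,c) \<in> S \<and> (b,d) \<in> S) \<or> ((c,a) \<notin> S \<and> (c,b) \<notin> S \<and> (c,c) \<in> S \<and> (c,d) \<in> S) \<or> ((d,a) \<notin> S \<and> (d,b) \<notin> S \<and> (d,c) \<in> S \<and> (d,d) \<in> S)))"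
    unfolding perm4_def using assms that by (smt (z3))
  ultimately show ?thesis by blast
qed

definition relP3 :: "'x \<Rightarrow> 'x \<Rightarrow> 'x \<Rightarrow> 'x \<Rightarrow> ('x \<times> 'x) set" where
  "relP3 a b c d = {(a,a),(a,b),(b,a),(b,c),(c,b),(c,d),(d,c),(d,d)}"

definition relP1 :: "'x \<Rightarrow> 'x \<Rightarrow> 'x \<Rightarrow> 'x \<Rightarrow> ('x \<times> 'x) set" where
  "relP1 a b c d = {(a,a),(b,b),(b,c),(c,b),(c,d),(d,c),(d,d)}"

context
  fixes a b c d :: 'x
  assumes dist: "distinct [a,b,c,d]" and univ: "UNIV = {a,b,c,d}"
begin

lemma neq: "a\<noteq>b" "a\<noteq>c" "a\<noteq>d" "b\<noteq>c" "b\<noteq>d" "c\<noteq>d"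
     "b\<noteq>a" "c\<noteq>a" "d\<noteq>a" "c\<noteq>b" "d\<noteq>b" "d\<noteq>c" using dist by auto

lemma all4: "(\<forall>x. P x) \<longleftrightarrow> P a \<and> P b \<and> P c \<and> P d"
  using univ by (metis UNIV_I insertE singletonD)

lemma ex4: "(\<exists>x. P x) \<longleftrightarrow> P a \<or> P b \<or> P c \<or> P d"
  using univ by (metis UNIV_I insertE singletonD)

lemma ex1_4: "(\<exists>!y. P y) \<longleftrightarrow> (P a \<and> \<not> P b \<and> \<not> P c \<and> \<not> P d) \<or> (\<not> P a \<and> P b \<and> \<not> P c \<and> \<not> P d)
   \<or> (\<not> P a \<and> \<not> P b \<and> P c \<and> \<not> P d) \<or> (\<not> P a \<and> \<not> P b \<and> \<not> P c \<and> P d)"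
proof -
  have "(\<exists>!y. P y) \<longleftrightarrow> (\<exists>y. P y \<and> (\<forall>y'. P y' \<longrightarrow> y' = y))" by blast
  also have "\<dots> \<longleftrightarrow> (P a \<and> (\<forall>y'. P y' \<longrightarrow> y' = a)) \<or> (P b \<and> (\<forall>y'. P y' \<longrightarrow> y' = b))
      \<or> (P c \<and> (\<forall>y'. P y' \<longrightarrow> y' = c)) \<or> (P d \<and> (\<forall>y'. P y' \<longrightarrow> y' = d))"
    by (rule ex4)
  also have "\<dots> \<longleftrightarrow> (P a \<and> ((P a \<longrightarrow> a = a) \<and> (P b \<longrightarrow> b = a) \<and> (P c \<longrightarrow> c = a) \<and> (P d \<longrightarrow> d = a)))
     \<or> (P b \<and> ((P a \<longrightarrow> a = b) \<and> (P b \<longrightarrow> b = b) \<and> (P c \<longrightarrow> c = b) \<and> (P d \<longrightarrow> d = b)))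
     \<or> (P c \<and> ((P a \<longrightarrow> a = c) \<and> (P b \<longrightarrow> b = c) \<and> (P c \<longrightarrow> c = c) \<and> (P d \<longrightarrow> d = c)))
     \<or> (P d \<and> ((P a \<longrightarrow> a = d) \<and> (P b \<longrightarrow> b = d) \<and> (P c \<longrightarrow> c = d) \<and> (P d \<longrightarrow> d = d)))"
    by (simp only: all4[of "\<lambda>y'. P y' \<longrightarrow> y' = a"] all4[of "\<lambda>y'. P y' \<longrightarrow> y' = b"]
      all4[of "\<lambda>y'. P y' \<longrightarrow> y' = c"] all4[of "\<lambda>y'. P y' \<longrightarrow> y' = d"])
  also have "\<dots> \<longleftrightarrow> (P a \<and> \<not> P b \<and> \<not> P c \<and> \<not> P d) \<or> (\<not> P a \<and> P b \<and> \<not> P c \<and> \<not> P d)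
   \<or> (\<not> P a \<and> \<not> P b \<and> P c \<and> \<not> P d) \<or> (\<not> P a \<and> \<not> P b \<and> \<not> P c \<and> P d)"
    by (simp only: neq simp_thms) blast
  finally show ?thesis .
qed

lemma perm4_iff: "permr R \<longleftrightarrow> perm4 R a b c d"
proof -
  have "permr R \<longleftrightarrow> (\<forall>x. \<exists>!y. (x,y)\<in>R) \<and> (\<forall>y. \<exists>!x. (x,y)\<in>R)" unfolding permr_def ..
  also have "\<dots> \<longleftrightarrow> (\<exists>!y. (a,y)\<in>R) \<and> (\<exists>!y. (b,y)\<in>R) \<and> (\<exists>!y. (c,y)\<in>R) \<and> (\<exists>!y. (d,y)\<in>R)
     \<and> (\<exists>!x. (x,a)\<in>R) \<and> (\<exists>!x. (x,b)\<in>R) \<and> (\<exists>!x. (x,c)\<in>R) \<and> (\<exists>!x. (x,d)\<in>R)"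
    unfolding all4[of "\<lambda>x. \<exists>!y. (x,y)\<in>R"] all4[of "\<lambda>y. \<exists>!x. (x,y)\<in>R"] by simp
  also have "\<dots> \<longleftrightarrow> perm4 R a b c d"
    unfolding perm4_def ex1_4[of "\<lambda>y. (a,y)\<in>R"] ex1_4[of "\<lambda>y. (b,y)\<in>R"] ex1_4[of "\<lambda>y. (c,y)\<in>R"]
      ex1_4[of "\<lambda>y. (d,y)\<in>R"] ex1_4[of "\<lambda>x. (x,a)\<in>R"] ex1_4[of "\<lambda>x. (x,b)\<in>R"]
      ex1_4[of "\<lambda>x. (x,c)\<in>R"] ex1_4[of "\<lambda>x. (x,d)\<in>R"]
    by simp
  finally show ?thesis .
qed

lemma relcomp4: "(x,z) \<in> R O S \<longleftrightarrow> ((x,a)\<in>R \<and> (a,z)\<in>S) \<or> ((x,b)\<in>R \<and> (b,z)\<in>S) \<or> ((x,c)\<in>R \<and> (c,z)\<in>S) \<or> ((x,d)\<in>R \<and> (d,z)\<in>S)"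
proof -
  have "(x,z) \<in> R O S \<longleftrightarrow> (\<exists>y. (x,y)\<in>R \<and> (y,z)\<in>S)" by blast
  then show ?thesis using ex4[of "\<lambda>y. (x,y)\<in>R \<and> (y,z)\<in>S"] by simp
qed

lemma prime3: assumes "R O S = relP3 a b c d" shows "permr R \<or> permr S"
proof -
  have e: "(((x,a)\<in>R \<and> (a,z)\<in>S) \<or> ((x,b)\<in>R \<and> (b,z)\<in>S) \<or> ((x,c)\<in>R \<and> (c,z)\<in>S) \<or> ((x,d)\<in>R \<and> (d,z)\<in>S)) \<longleftrightarrow> (x,z) \<in> relP3 a b c d" for x z
    using relcomp4[of x z R S] assms by simp
  have "perm4 R a b c d \<or> perm4 S a b c d"
    by (rule prime_gen3) (simp_all only: e, simp_all add: relP3_def neq)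
  then show ?thesis using perm4_iff by blast
qed

lemma prime1: assumes "R O S = relP1 a b c d" shows "permr R \<or> permr S"
proof -
  have e: "(((x,a)\<in>R \<and> (a,z)\<in>S) \<or> ((x,b)\<in>R \<and> (b,z)\<in>S) \<or> ((x,c)\<in>R \<and> (c,z)\<in>S) \<or> ((x,d)\<in>R \<and> (d,z)\<in>S)) \<longleftrightarrow> (x,z) \<in> relP1 a b c d" for x z
    using relcomp4[of x z R S] assms by simp
  have "perm4 R a b c d \<or> perm4 S a b c d"
    by (rule prime_gen1) (simp_all only: e, simp_all add: relP1_def neq)
  then show ?thesis using perm4_iff by blast
qed

lemma not_perm_P3: "\<not> permr (relP3 a b c d)"
proof
  assume "permr (relP3 a b c d)"
  from permrD(2)[OF this, of a a b] show False using neq by (simp add: relP3_def)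
qed

lemma not_perm_P1: "\<not> permr (relP1 a b c d)"
proof
  assume "permr (relP1 a b c d)"
  from permrD(2)[OF this, of b b c] show False using neq by (simp add: relP1_def)
qed

lemma disj13: assumes s: "permr s" and t: "permr t" shows "s O relP1 a b c d O t \<noteq> relP3 a b c d"
proof
  assume eq: "s O relP1 a b c d O t = relP3 a b c d"
  obtain x0 where x0: "(x0, a) \<in> s" using permrD(3)[OF s] by blast
  obtain z where z: "(a, z) \<in> t" using permrD(1)[OF t] by blast
  have row: "z' = z" if "(x0, z') \<in> relP3 a b c d" for z'
  proof -
    from that eq obtain y w where yw: "(x0,y) \<in> s" "(y,w) \<in> relP1 a b c d" "(w,z') \<in> t" by blast
    have "y = a" using permrD(2)[OF s yw(1) x0] .
    then have "w = a" using yw(2) neq by (auto simp: relP1_def)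
    then show "z' = z" using permrD(2)[OF t] yw(3) z by blast
  qed
  have "x0 \<in> {a,b,c,d}" using univ by blast
  then have "\<exists>y1 y2. y1 \<noteq> y2 \<and> (x0,y1) \<in> relP3 a b c d \<and> (x0,y2) \<in> relP3 a b c d"
    using neq by (auto simp: relP3_def)
  then show False using row by blast
qed

end


lemma mult_entry:
  assumes "A \<in> carrier_mat N N" "B \<in> carrier_mat N N" "r < N" "c < N"
  shows "(A * B) $$ (r,c) = (\<Sum>k<N. A $$ (r,k) * B $$ (k,c))"
  using assms by (simp add: scalar_prod_def atLeast0LessThan)

definition ent :: "nat \<Rightarrow> 'k::field \<Rightarrow> 'k \<Rightarrow> 'k \<Rightarrow> nat \<Rightarrow> nat \<Rightarrow> 'k" where
  "ent n \<alpha> \<beta> \<gamma> r c = (if r = c then \<alpha> else 0) + (if r = c + n + 1 \<and> c < n then \<beta> else 0)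
      + (if r = c + n \<and> 1 \<le> c \<and> c \<le> n then \<gamma> else 0)"

definition mk :: "nat \<Rightarrow> 'k::field \<Rightarrow> 'k \<Rightarrow> 'k \<Rightarrow> 'k mat" where
  "mk n \<alpha> \<beta> \<gamma> = mat (2*n+1) (2*n+1) (\<lambda>(r,c). ent n \<alpha> \<beta> \<gamma> r c)"

lemma mk_carrier[simp]: "mk n \<alpha> \<beta> \<gamma> \<in> carrier_mat (2*n+1) (2*n+1)"
  unfolding mk_def by simp

lemma mk_dim[simp]: "dim_row (mk n \<alpha> \<beta> \<gamma>) = 2*n+1" "dim_col (mk n \<alpha> \<beta> \<gamma>) = 2*n+1"
  unfolding mk_def by simp_all

lemma mk_index[simp]: "r < 2*n+1 \<Longrightarrow> c < 2*n+1 \<Longrightarrow> mk n \<alpha> \<beta> \<gamma> $$ (r,c) = ent n \<alpha> \<beta> \<gamma> r c"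
  unfolding mk_def by simp

lemma ent_low: "r \<le> n \<Longrightarrow> ent n \<alpha> \<beta> \<gamma> r c = (if c = r then \<alpha> else 0)"
  unfolding ent_def by auto

lemma ent_high: "n < r \<Longrightarrow> r < 2*n+1 \<Longrightarrow> ent n \<alpha> \<beta> \<gamma> r k =
   (if k = r then \<alpha> else 0) + (if k = r - n - 1 then \<beta> else 0) + (if k = r - n then \<gamma> else 0)"
  unfolding ent_def by auto

lemma if0_mult: "(if P then a else (0::'a::semiring_0)) * b = (if P then a * b else 0)"
  by simp

lemma mk_mult: fixes \<alpha> \<beta> \<gamma> \<alpha>' \<beta>' \<gamma>' :: "'k::field"
  shows "mk n \<alpha> \<beta> \<gamma> * mk n \<alpha>' \<beta>' \<gamma>' = mk n (\<alpha>*\<alpha>') (\<alpha>*\<beta>' + \<beta>*\<alpha>') (\<alpha>*\<gamma>' + \<gamma>*\<alpha>')"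
proof (rule eq_matI)
  fix r c assume "r < dim_row (mk n (\<alpha>*\<alpha>') (\<alpha>*\<beta>' + \<beta>*\<alpha>') (\<alpha>*\<gamma>' + \<gamma>*\<alpha>'))"
    "c < dim_col (mk n (\<alpha>*\<alpha>') (\<alpha>*\<beta>' + \<beta>*\<alpha>') (\<alpha>*\<gamma>' + \<gamma>*\<alpha>'))"
  then have r: "r < 2*n+1" and c: "c < 2*n+1" by simp_all
  have lhs: "(mk n \<alpha> \<beta> \<gamma> * mk n \<alpha>' \<beta>' \<gamma>') $$ (r,c) = (\<Sum>k<2*n+1. ent n \<alpha> \<beta> \<gamma> r k * ent n \<alpha>' \<beta>' \<gamma>' k c)"
  proof -
    have "(mk n \<alpha> \<beta> \<gamma> * mk n \<alpha>' \<beta>' \<gamma>') $$ (r,c) = (\<Sum>k<2*n+1. mk n \<alpha> \<beta> \<gamma> $$ (r,k) * mk n \<alpha>' \<beta>' \<gamma>' $$ (k,c))"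
      by (rule mult_entry[OF mk_carrier mk_carrier r c])
    also have "\<dots> = (\<Sum>k<2*n+1. ent n \<alpha> \<beta> \<gamma> r k * ent n \<alpha>' \<beta>' \<gamma>' k c)"
      by (rule sum.cong) (use r c in auto)
    finally show ?thesis .
  qed
  show "(mk n \<alpha> \<beta> \<gamma> * mk n \<alpha>' \<beta>' \<gamma>') $$ (r,c) = mk n (\<alpha>*\<alpha>') (\<alpha>*\<beta>' + \<beta>*\<alpha>') (\<alpha>*\<gamma>' + \<gamma>*\<alpha>') $$ (r,c)"
  proof (cases "r \<le> n")
    case True
    have "(\<Sum>k<2*n+1. ent n \<alpha> \<beta> \<gamma> r k * ent n \<alpha>' \<beta>' \<gamma>' k c) = (\<Sum>k<2*n+1. if k = r then \<alpha> * ent n \<alpha>' \<beta>' \<gamma>' k c else 0)"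
      by (rule sum.cong) (use True in \<open>auto simp: ent_low\<close>)
    also have "\<dots> = \<alpha> * ent n \<alpha>' \<beta>' \<gamma>' r c" by (simp only: sum.delta[OF finite_lessThan] lessThan_iff) (use r in simp)
    finally show ?thesis using lhs True r c by (simp add: ent_low)
  next
    case False
    have "(\<Sum>k<2*n+1. ent n \<alpha> \<beta> \<gamma> r k * ent n \<alpha>' \<beta>' \<gamma>' k c) =
      (\<Sum>k<2*n+1. (if k = r then \<alpha> * ent n \<alpha>' \<beta>' \<gamma>' k c else 0) + (if k = r - n - 1 then \<beta> * ent n \<alpha>' \<beta>' \<gamma>' k c else 0)
        + (if k = r - n then \<gamma> * ent n \<alpha>' \<beta>' \<gamma>' k c else 0))"
      by (rule sum.cong) (use False r in \<open>auto simp: ent_high distrib_right\<close>)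
    also have "\<dots> = \<alpha> * ent n \<alpha>' \<beta>' \<gamma>' r c + \<beta> * ent n \<alpha>' \<beta>' \<gamma>' (r-n-1) c + \<gamma> * ent n \<alpha>' \<beta>' \<gamma>' (r-n) c"
      by (simp only: sum.distrib sum.delta[OF finite_lessThan] lessThan_iff) (use r False in auto)
    also have "\<dots> = ent n (\<alpha>*\<alpha>') (\<alpha>*\<beta>' + \<beta>*\<alpha>') (\<alpha>*\<gamma>' + \<gamma>*\<alpha>') r c"
    proof -
      have e1: "ent n \<alpha>' \<beta>' \<gamma>' (r-n-1) c = (if c = r-n-1 then \<alpha>' else 0)"
        by (rule ent_low) (use False r in arith)
      have e2: "ent n \<alpha>' \<beta>' \<gamma>' (r-n) c = (if c = r-n then \<alpha>' else 0)"
        by (rule ent_low) (use False r in arith)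
      have c1: "(r = c + n + 1 \<and> c < n) \<longleftrightarrow> c = r-n-1" using False r by arith
      have c2: "(r = c + n \<and> 1 \<le> c \<and> c \<le> n) \<longleftrightarrow> c = r-n" using False r by arith
      have hr: "n < r" "r < 2*n+1" using False r by auto
      have d1: "r \<noteq> r-n-1" using hr by arith
      have d2: "r \<noteq> r - n" using hr by arith
      have d3: "r-n-1 \<noteq> r-n" using hr by arith
      have ehi: "ent n a1 a2 a3 r c = (if c = r then a1 else if c = r-n-1 then a2 else if c = r-n then a3 else 0)"
        for a1 a2 a3 :: 'k
        unfolding ent_def c1 c2 using d1 d2 d3 by auto
      show ?thesis unfolding e1 e2 ehi
        using d1 d2 d3 by (auto simp: ring_distribs)
    qed
    finally show ?thesis using lhs r c by simp
  qed
qed simp_all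

lemma sum_delta_lt: "j < (N::nat) \<Longrightarrow> (\<Sum>k<N. if k = j then f k else 0) = f j"
  by simp

lemma ent_X: "ent n 0 1 0 r c = (if r = c + n + 1 \<and> c < n then 1 else 0)"
  unfolding ent_def by simp
lemma ent_Y: "ent n 0 0 1 r c = (if r = c + n \<and> 1 \<le> c \<and> c \<le> n then 1 else 0)"
  unfolding ent_def by simp

context
  fixes n :: nat and Q :: "'k::field mat"
  assumes Qc: "Q \<in> carrier_mat (2*n+1) (2*n+1)"
begin

lemma entry_gen:
  assumes "r < 2*n+1" "c < 2*n+1"
  shows "(Q * mk n a b g) $$ (r,c) = (\<Sum>k<2*n+1. Q $$ (r,k) * ent n a b g k c)"
    "(mk n a b g * Q) $$ (r,c) = (\<Sum>k<2*n+1. ent n a b g r k * Q $$ (k,c))"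
proof -
  have "(Q * mk n a b g) $$ (r,c) = (\<Sum>k<2*n+1. Q $$ (r,k) * mk n a b g $$ (k,c))"
    by (rule mult_entry[OF Qc mk_carrier assms])
  also have "\<dots> = (\<Sum>k<2*n+1. Q $$ (r,k) * ent n a b g k c)"
    by (rule sum.cong) (use assms in auto)
  finally show "(Q * mk n a b g) $$ (r,c) = (\<Sum>k<2*n+1. Q $$ (r,k) * ent n a b g k c)" .
  have "(mk n a b g * Q) $$ (r,c) = (\<Sum>k<2*n+1. mk n a b g $$ (r,k) * Q $$ (k,c))"
    by (rule mult_entry[OF mk_carrier Qc assms])
  also have "\<dots> = (\<Sum>k<2*n+1. ent n a b g r k * Q $$ (k,c))"
    by (rule sum.cong) (use assms in auto)
  finally show "(mk n a b g * Q) $$ (r,c) = (\<Sum>k<2*n+1. ent n a b g r k * Q $$ (k,c))" .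
qed

lemma QX: assumes "r < 2*n+1" "c < 2*n+1"
  shows "(Q * mk n 0 1 0) $$ (r,c) = (if c < n then Q $$ (r, c+n+1) else 0)"
proof (cases "c < n")
  case True
  have "(Q * mk n 0 1 0) $$ (r,c) = (\<Sum>k<2*n+1. if k = c+n+1 then Q $$ (r,k) else 0)"
    unfolding entry_gen[OF assms] by (rule sum.cong) (use True in \<open>auto simp: ent_X\<close>)
  also have "\<dots> = Q $$ (r, c+n+1)" by (rule sum_delta_lt) (use True in simp)
  finally show ?thesis using True by simp
next
  case False
  have "(Q * mk n 0 1 0) $$ (r,c) = (\<Sum>k<2*n+1. 0)"
    unfolding entry_gen[OF assms] by (rule sum.cong) (use False in \<open>auto simp: ent_X\<close>)
  then show ?thesis using False by simp
qed

lemma XQ: assumes "r < 2*n+1" "c < 2*n+1"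
  shows "(mk n 0 1 0 * Q) $$ (r,c) = (if n < r then Q $$ (r-n-1, c) else 0)"
proof -
  have "(mk n 0 1 0 * Q) $$ (r,c) = (\<Sum>k<2*n+1. if k = r-n-1 then (if n < r then Q $$ (k,c) else 0) else 0)"
    unfolding entry_gen[OF assms] by (rule sum.cong) (use assms in \<open>auto simp: ent_X\<close>)
  also have "\<dots> = (if n < r then Q $$ (r-n-1, c) else 0)"
    using assms by (cases "n < r") (simp_all add: sum_delta_lt)
  finally show ?thesis .
qed

lemma QY: assumes "r < 2*n+1" "c < 2*n+1"
  shows "(Q * mk n 0 0 1) $$ (r,c) = (if 1 \<le> c \<and> c \<le> n then Q $$ (r, c+n) else 0)"
proof (cases "1 \<le> c \<and> c \<le> n")
  case True
  have "(Q * mk n 0 0 1) $$ (r,c) = (\<Sum>k<2*n+1. if k = c+n then Q $$ (r,k) else 0)"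
    unfolding entry_gen[OF assms] by (rule sum.cong) (use True in \<open>auto simp: ent_Y\<close>)
  also have "\<dots> = Q $$ (r, c+n)" by (rule sum_delta_lt) (use True in simp)
  finally show ?thesis using True by simp
next
  case False
  have "(Q * mk n 0 0 1) $$ (r,c) = (\<Sum>k<2*n+1. 0)"
    unfolding entry_gen[OF assms] by (rule sum.cong) (use False in \<open>auto simp: ent_Y\<close>)
  then show ?thesis using False by auto
qed

lemma YQ: assumes "r < 2*n+1" "c < 2*n+1"
  shows "(mk n 0 0 1 * Q) $$ (r,c) = (if n < r then Q $$ (r-n, c) else 0)"
proof -
  have "(mk n 0 0 1 * Q) $$ (r,c) = (\<Sum>k<2*n+1. if k = r-n then (if n < r then Q $$ (k,c) else 0) else 0)"
    unfolding entry_gen[OF assms] by (rule sum.cong) (use assms in \<open>auto simp: ent_Y\<close>)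
  also have "\<dots> = (if n < r then Q $$ (r-n, c) else 0)"
    using assms by (cases "n < r") (simp_all add: sum_delta_lt)
  finally show ?thesis .
qed

context
  assumes cX: "Q * mk n 0 1 0 = mk n 0 1 0 * Q" and cY: "Q * mk n 0 0 1 = mk n 0 0 1 * Q"
begin

lemma U1: "i < n \<Longrightarrow> c < 2*n+1 \<Longrightarrow> Q $$ (i,c) = (if c < n then Q $$ (i+n+1, c+n+1) else 0)"
  using QX[of "i+n+1" c] XQ[of "i+n+1" c] cX by simp

lemma U2: "r \<le> n \<Longrightarrow> c < n \<Longrightarrow> Q $$ (r, c+n+1) = 0"
  using QX[of r c] XQ[of r c] cX by simp

lemma U3: "i < n \<Longrightarrow> c < 2*n+1 \<Longrightarrow> Q $$ (i+1,c) = (if 1 \<le> c \<and> c \<le> n then Q $$ (i+n+1, c+n) else 0)"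
  using QY[of "i+n+1" c] YQ[of "i+n+1" c] cY by simp

lemma shift1: "i < n \<Longrightarrow> c < n \<Longrightarrow> Q $$ (i,c) = Q $$ (i+1,c+1)"
  using U1[of i c] U3[of i "c+1"] by simp

lemma shiftk: "i + k \<le> n \<Longrightarrow> c + k \<le> n \<Longrightarrow> Q $$ (i,c) = Q $$ (i+k,c+k)"
proof (induction k)
  case 0 then show ?case by simp
next
  case (Suc k)
  then have "Q $$ (i,c) = Q $$ (i+k,c+k)" by simp
  also have "\<dots> = Q $$ (i+k+1,c+k+1)" using Suc.prems by (intro shift1) auto
  finally show ?case by simp
qed

lemma F1: assumes "r \<le> n" "c < 2*n+1" shows "Q $$ (r,c) = (if c = r then Q $$ (0,0) else 0)"
proof (cases "c \<le> n")
  case True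
  consider "c = r" | "c < r" | "r < c" by arith
  then show ?thesis
  proof cases
    case 1 then show ?thesis using shiftk[of 0 r 0] assms by simp
  next
    case 2
    have "Q $$ (r-c, 0) = Q $$ (r-c+c, 0+c)" using assms True by (intro shiftk) auto
    moreover have "Q $$ (r-c-1+1, 0) = 0" using U3[of "r-c-1" 0] assms 2 by simp
    moreover have "r-c-1+1 = r-c" using 2 by arith
    ultimately show ?thesis using 2 by simp
  next
    case 3
    have "Q $$ (r, c) = Q $$ (r+(n-c), c+(n-c))" using assms True 3 by (intro shiftk) auto
    moreover have "Q $$ (r+(n-c), n) = 0" using U1[of "r+(n-c)" n] assms 3 True by simp
    ultimately show ?thesis using 3 True by simp
  qed
next
  case False
  then have "Q $$ (r, (c-n-1)+n+1) = 0" using assms by (intro U2) auto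
  then show ?thesis using False assms by auto
qed

lemma F2: assumes "n < r" "r < 2*n+1" "n < c" "c < 2*n+1"
  shows "Q $$ (r,c) = (if c = r then Q $$ (0,0) else 0)"
proof -
  have "Q $$ (r-n-1, c-n-1) = Q $$ (r-n-1+n+1, c-n-1+n+1)" using U1[of "r-n-1" "c-n-1"] assms by simp
  moreover have "Q $$ (r-n-1, c-n-1) = (if c-n-1 = r-n-1 then Q $$ (0,0) else 0)" using assms by (intro F1) auto
  ultimately show ?thesis using assms by auto
qed


lemma Qmult: "r < 2*n+1 \<Longrightarrow> c < 2*n+1 \<Longrightarrow> (Q * Q) $$ (r,c) = (\<Sum>k<2*n+1. Q $$ (r,k) * Q $$ (k,c))"
  by (rule mult_entry[OF Qc Qc])

lemma idem:
  assumes QQ: "Q * Q = Q"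
  shows "Q = 0\<^sub>m (2*n+1) (2*n+1) \<or> Q = 1\<^sub>m (2*n+1)"
proof -
  define q where "q = Q $$ (0,0)"
  have "(Q * Q) $$ (0,0) = (\<Sum>k<2*n+1. Q $$ (0,k) * Q $$ (k,0))" by (rule Qmult) auto
  also have "\<dots> = (\<Sum>k<2*n+1. if k = 0 then q * Q $$ (k,0) else 0)"
  proof (rule sum.cong)
    fix k assume "k \<in> {..<2*n+1}"
    then have "Q $$ (0,k) = (if k = 0 then q else 0)" using F1[of 0 k] unfolding q_def by auto
    then show "Q $$ (0,k) * Q $$ (k,0) = (if k = 0 then q * Q $$ (k,0) else 0)" by simp
  qed simp
  also have "\<dots> = q * q" unfolding q_def by (subst sum_delta_lt) auto
  finally have "q * q = q" using QQ q_def by simp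
  then have "q * (q - 1) = 0" by (simp add: right_diff_distrib)
  then have "q = 0 \<or> q - 1 = 0" by simp
  then have "q = 0 \<or> q = 1" by simp
  then show ?thesis
  proof
    assume q0: "q = 0"
    then have Q00: "Q $$ (0,0) = 0" unfolding q_def .
    have "Q = 0\<^sub>m (2*n+1) (2*n+1)"
    proof (rule eq_matI)
      fix r c assume "r < dim_row (0\<^sub>m (2*n+1) (2*n+1) :: 'k mat)" "c < dim_col (0\<^sub>m (2*n+1) (2*n+1) :: 'k mat)"
      then have r: "r < 2*n+1" and c: "c < 2*n+1" by auto
      have "Q $$ (r,c) = (Q * Q) $$ (r,c)" using QQ by simp
      also have "\<dots> = (\<Sum>k<2*n+1. Q $$ (r,k) * Q $$ (k,c))" using r c by (rule Qmult)
      also have "\<dots> = (\<Sum>k<2*n+1. 0)"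
      proof (rule sum.cong)
        fix k assume "k \<in> {..<2*n+1}"
        then have k: "k < 2*n+1" by simp
        show "Q $$ (r,k) * Q $$ (k,c) = 0"
        proof (cases "k \<le> n")
          case True
          then have "Q $$ (k,c) = 0" using F1[OF True c] Q00 by simp
          then show ?thesis by simp
        next
          case False
          have "Q $$ (r,k) = 0"
          proof (cases "r \<le> n")
            case True
            then show ?thesis using F1[OF True k] Q00 by simp
          next
            case False': False
            then show ?thesis using F2[of r k] False k r Q00 by simp
          qed
          then show ?thesis by simp
        qed
      qed simp
      finally show "Q $$ (r,c) = 0\<^sub>m (2*n+1) (2*n+1) $$ (r,c)" using r c by simp
    qed (use Qc in auto)
    then show ?thesis by simp
  next
    assume q1: "q = 1"
    then have Q00: "Q $$ (0,0) = 1" unfolding q_def .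
    have "Q = 1\<^sub>m (2*n+1)"
    proof (rule eq_matI)
      fix r c assume "r < dim_row (1\<^sub>m (2*n+1) :: 'k mat)" "c < dim_col (1\<^sub>m (2*n+1) :: 'k mat)"
      then have r: "r < 2*n+1" and c: "c < 2*n+1" by auto
      show "Q $$ (r,c) = 1\<^sub>m (2*n+1) $$ (r,c)"
      proof (cases "n < r \<and> c \<le> n")
        case True
        have "Q $$ (r,c) = (Q * Q) $$ (r,c)" using QQ by simp
        also have "\<dots> = (\<Sum>k<2*n+1. Q $$ (r,k) * Q $$ (k,c))" using r c by (rule Qmult)
        also have "\<dots> = (\<Sum>k<2*n+1. (if k = c then Q $$ (r,c) else 0) + (if k = r then Q $$ (r,c) else 0))"
        proof (rule sum.cong)
          fix k assume "k \<in> {..<2*n+1}"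
          then have k: "k < 2*n+1" by simp
          show "Q $$ (r,k) * Q $$ (k,c) = (if k = c then Q $$ (r,c) else 0) + (if k = r then Q $$ (r,c) else 0)"
          proof (cases "k \<le> n")
            case kl: True
            have "Q $$ (k,c) = (if c = k then 1 else 0)" using F1[OF kl c] Q00 by simp
            then show ?thesis using kl True by auto
          next
            case kh: False
            have "Q $$ (r,k) = (if k = r then 1 else 0)" using F2[of r k] kh True k r Q00 by simp
            then show ?thesis using kh True by auto
          qed
        qed simp
        also have "\<dots> = Q $$ (r,c) + Q $$ (r,c)"
          by (simp only: sum.distrib sum_delta_lt r c)
        finally have "Q $$ (r,c) = 0" by (metis add_cancel_right_right)
        then show ?thesis using True r c by simp
      next
        case False
        show ?thesis
        proof (cases "r \<le> n")
          case True
          then show ?thesis using F1[OF True c] Q00 r c by auto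
        next
          case False': False
          then show ?thesis using F2[of r c] False r c Q00 by auto
        qed
      qed
    qed (use Qc in auto)
    then show ?thesis by simp
  qed
qed
end
end

definition cS :: "('x \<times> 'x) set set \<Rightarrow> ('x::finite, 'k::field) malg \<Rightarrow> 'k" where
  "cS X f = (\<Sum>T\<in>X. f T)"

definition rho :: "nat \<Rightarrow> ('x \<times> 'x) set set \<Rightarrow> ('x \<times> 'x) set set \<Rightarrow> ('x \<times> 'x) set set
    \<Rightarrow> ('x::finite, 'k::field) malg \<Rightarrow> 'k mat" where
  "rho n G A B f = mk n (cS G f) (cS A f) (cS B f)"

lemma cS_mult_gen:
  fixes X :: "('x::finite \<times> 'x) set set" and f g :: "('x, 'k::field) malg"
  shows "cS X (malg_mult f g) = (\<Sum>p\<in>{p. fst p O snd p \<in> X}. f (fst p) * g (snd p))"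
proof -
  have "cS X (malg_mult f g) = (\<Sum>T\<in>X. \<Sum>p\<in>{p \<in> {p. fst p O snd p \<in> X}. fst p O snd p = T}. f (fst p) * g (snd p))"
    unfolding cS_def malg_mult_def
  proof (rule sum.cong)
    fix T assume T: "T \<in> X"
    show "(\<Sum>p\<in>{(R, S). R O S = T}. f (fst p) * g (snd p)) =
        (\<Sum>p\<in>{p \<in> {p. fst p O snd p \<in> X}. fst p O snd p = T}. f (fst p) * g (snd p))"
      by (rule sum.cong) (use T in auto)
  qed simp
  also have "\<dots> = (\<Sum>p\<in>{p. fst p O snd p \<in> X}. f (fst p) * g (snd p))"
    by (rule sum.group) auto
  finally show ?thesis .
qed

lemma sum_times: "(\<Sum>p\<in>X \<times> Y. f (fst p) * g (snd p)) = (\<Sum>x\<in>X. f x) * (\<Sum>y\<in>Y. (g y :: 'k::field))"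
  by (simp add: sum_product sum.cartesian_product case_prod_beta)

lemma mk_add: "mk n a b c + mk n a' b' c' = mk n (a+a') (b+b') (c+c')"
  by (rule eq_matI) (auto simp: ent_def)

lemma mk_smult: "k \<cdot>\<^sub>m mk n a b c = mk n (k*a) (k*b) (k*c)"
  by (rule eq_matI) (auto simp: ent_def algebra_simps)

lemma mk_one: "mk n 1 0 0 = 1\<^sub>m (2*n+1)"
  by (rule eq_matI) (auto simp: ent_def)

context
  fixes G A B :: "('x::finite \<times> 'x) set set"
  assumes hG: "\<And>R S. R O S \<in> G \<longleftrightarrow> R \<in> G \<and> S \<in> G"
    and hA: "\<And>R S. R O S \<in> A \<longleftrightarrow> (R \<in> G \<and> S \<in> A) \<or> (R \<in> A \<and> S \<in> G)"
    and hB: "\<And>R S. R O S \<in> B \<longleftrightarrow> (R \<in> G \<and> S \<in> B) \<or> (R \<in> B \<and> S \<in> G)"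
    and IdG: "Id \<in> G" and GA: "G \<inter> A = {}" and GB: "G \<inter> B = {}" and AB: "A \<inter> B = {}"
begin

lemma cG_mult: "cS G (malg_mult f g) = cS G f * cS G (g :: ('x, 'k::field) malg)"
proof -
  have e: "{p. fst p O snd p \<in> G} = G \<times> G" using hG by auto
  show ?thesis unfolding cS_mult_gen e by (simp add: sum_times cS_def)
qed

lemma cX_mult:
  assumes hX: "\<And>R S. R O S \<in> X \<longleftrightarrow> (R \<in> G \<and> S \<in> X) \<or> (R \<in> X \<and> S \<in> G)" and GX: "G \<inter> X = {}"
  shows "cS X (malg_mult f g) = cS G f * cS X g + cS X f * cS G (g :: ('x, 'k::field) malg)"
proof -
  have e: "{p. fst p O snd p \<in> X} = G \<times> X \<union> X \<times> G" using hX by auto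
  have d: "(G \<times> X) \<inter> (X \<times> G) = {}" using GX by auto
  have "(\<Sum>p\<in>G \<times> X \<union> X \<times> G. f (fst p) * g (snd p)) = (\<Sum>p\<in>G \<times> X. f (fst p) * g (snd p)) + (\<Sum>p\<in>X \<times> G. f (fst p) * g (snd p))"
    by (rule sum.union_disjoint) (use d in auto)
  then show ?thesis unfolding cS_mult_gen e by (simp add: sum_times cS_def)
qed

lemma is_rep_rho: "is_rep (2*n+1) (rho n G A B :: ('x, 'k::field) malg \<Rightarrow> 'k mat)"
  unfolding is_rep_def
proof (intro conjI allI)
  fix f :: "('x, 'k) malg"
  show "rho n G A B f \<in> carrier_mat (2*n+1) (2*n+1)" unfolding rho_def by (rule mk_carrier)
next
  fix f g :: "('x, 'k) malg"
  show "rho n G A B (malg_add f g) = rho n G A B f + rho n G A B g"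
    unfolding rho_def mk_add by (simp add: cS_def malg_add_def sum.distrib)
next
  fix k :: 'k and f :: "('x, 'k) malg"
  show "rho n G A B (malg_smult k f) = k \<cdot>\<^sub>m rho n G A B f"
    unfolding rho_def mk_smult by (simp add: cS_def malg_smult_def sum_distrib_left)
next
  fix f g :: "('x, 'k) malg"
  show "rho n G A B (malg_mult f g) = rho n G A B f * rho n G A B g"
    unfolding rho_def mk_mult cG_mult cX_mult[OF hA GA] cX_mult[OF hB GB] by (simp add: mult.commute)
next
  have "cS G (malg_one :: ('x, 'k) malg) = 1" unfolding cS_def malg_one_def using IdG by simp
  moreover have "cS A (malg_one :: ('x, 'k) malg) = 0" unfolding cS_def malg_one_def using IdG GA
    by (intro sum.neutral) auto
  moreover have "cS B (malg_one :: ('x, 'k) malg) = 0" unfolding cS_def malg_one_def using IdG GB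
    by (intro sum.neutral) auto
  ultimately show "rho n G A B malg_one = (1\<^sub>m (2*n+1) :: 'k mat)" unfolding rho_def by (simp add: mk_one)
qed

lemma rho_ind:
  assumes "T \<in> A"
  shows "rho n G A B (\<lambda>S. if S = T then 1 else 0) = (mk n 0 1 0 :: 'k::field mat)"
proof -
  have "T \<notin> G" "T \<notin> B" using assms GA AB by auto
  then show ?thesis unfolding rho_def cS_def using assms by simp
qed

lemma rho_indB:
  assumes "T \<in> B"
  shows "rho n G A B (\<lambda>S. if S = T then 1 else 0) = (mk n 0 0 1 :: 'k::field mat)"
proof -
  have "T \<notin> G" "T \<notin> A" using assms GB AB by auto
  then show ?thesis unfolding rho_def cS_def using assms by simp
qed

end


lemma dsum_carrier:
  assumes "A1 \<in> carrier_mat n1 n1" "A2 \<in> carrier_mat n2 n2"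
  shows "four_block_mat A1 (0\<^sub>m n1 n2) (0\<^sub>m n2 n1) A2 \<in> carrier_mat (n1+n2) (n1+n2)"
  using assms by simp

lemma E_comm:
  fixes A1 A2 :: "'k::field mat"
  assumes c: "A1 \<in> carrier_mat n1 n1" "A2 \<in> carrier_mat n2 n2"
  shows "four_block_mat (1\<^sub>m n1) (0\<^sub>m n1 n2) (0\<^sub>m n2 n1) (0\<^sub>m n2 n2) * four_block_mat A1 (0\<^sub>m n1 n2) (0\<^sub>m n2 n1) A2
       = four_block_mat A1 (0\<^sub>m n1 n2) (0\<^sub>m n2 n1) A2 * four_block_mat (1\<^sub>m n1) (0\<^sub>m n1 n2) (0\<^sub>m n2 n1) (0\<^sub>m n2 n2)"
proof -
  have "four_block_mat (1\<^sub>m n1) (0\<^sub>m n1 n2) (0\<^sub>m n2 n1) (0\<^sub>m n2 n2) * four_block_mat A1 (0\<^sub>m n1 n2) (0\<^sub>m n2 n1) A2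
     = four_block_mat (1\<^sub>m n1 * A1 + 0\<^sub>m n1 n2 * 0\<^sub>m n2 n1) (1\<^sub>m n1 * 0\<^sub>m n1 n2 + 0\<^sub>m n1 n2 * A2)
        (0\<^sub>m n2 n1 * A1 + 0\<^sub>m n2 n2 * 0\<^sub>m n2 n1) (0\<^sub>m n2 n1 * 0\<^sub>m n1 n2 + 0\<^sub>m n2 n2 * A2)"
    by (rule mult_four_block_mat) (use c in auto)
  also have "\<dots> = four_block_mat A1 (0\<^sub>m n1 n2) (0\<^sub>m n2 n1) (0\<^sub>m n2 n2)" using c by simp
  also have "\<dots> = four_block_mat (A1 * 1\<^sub>m n1 + 0\<^sub>m n1 n2 * 0\<^sub>m n2 n1) (A1 * 0\<^sub>m n1 n2 + 0\<^sub>m n1 n2 * 0\<^sub>m n2 n2)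
        (0\<^sub>m n2 n1 * 1\<^sub>m n1 + A2 * 0\<^sub>m n2 n1) (0\<^sub>m n2 n1 * 0\<^sub>m n1 n2 + A2 * 0\<^sub>m n2 n2)" using c by simp
  also have "\<dots> = four_block_mat A1 (0\<^sub>m n1 n2) (0\<^sub>m n2 n1) A2 * four_block_mat (1\<^sub>m n1) (0\<^sub>m n1 n2) (0\<^sub>m n2 n1) (0\<^sub>m n2 n2)"
    by (rule mult_four_block_mat[symmetric]) (use c in auto)
  finally show ?thesis .
qed

lemma assoc_dim:
  assumes h1: "dim_col A = dim_row B" and h2: "dim_col B = dim_row C"
  shows "A * B * C = A * (B * (C :: 'a::semiring_0 mat))"
proof -
  have c: "A \<in> carrier_mat (dim_row A) (dim_col A)" "B \<in> carrier_mat (dim_col A) (dim_col B)"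
    "C \<in> carrier_mat (dim_col B) (dim_col C)" using h1 h2 unfolding carrier_mat_def by auto
  show ?thesis by (rule assoc_mult_mat[OF c])
qed

lemma indec_main:
  fixes \<rho> :: "('x::finite, 'k::field) malg \<Rightarrow> 'k mat" and n :: nat
  assumes rep: "is_rep (2*n+1) \<rho>"
    and hX: "\<rho> fX = mk n 0 1 0" and hY: "\<rho> fY = mk n 0 0 1"
  shows "indecomposable (2*n+1) \<rho>"
  unfolding indecomposable_def
proof (intro conjI notI)
  show "is_rep (2*n+1) \<rho>" by (rule rep)
  show "0 < 2*n+1" by simp
next
  assume "\<exists>n1 n2 \<rho>1 \<rho>2. n1 > 0 \<and> n2 > 0 \<and> is_rep n1 \<rho>1 \<and> is_rep n2 \<rho>2 \<and>
            rep_iso (2*n+1) \<rho> (n1 + n2) (rep_dsum n1 \<rho>1 n2 \<rho>2)"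
  then obtain n1 n2 and \<rho>1 \<rho>2 :: "('x, 'k) malg \<Rightarrow> 'k mat" where
    n1: "n1 > 0" and n2: "n2 > 0" and r1: "is_rep n1 \<rho>1" and r2: "is_rep n2 \<rho>2"
    and iso: "rep_iso (2*n+1) \<rho> (n1 + n2) (rep_dsum n1 \<rho>1 n2 \<rho>2)" by blast
  define N where "N = 2*n+1"
  have NN: "N = n1 + n2" using iso unfolding rep_iso_def N_def by simp
  obtain P where Pc: "P \<in> carrier_mat N N" and Pinv: "invertible_mat P"
    and Pint: "\<And>f. P * \<rho> f = rep_dsum n1 \<rho>1 n2 \<rho>2 f * P"
    using iso unfolding rep_iso_def N_def by blast
  obtain P' where PP': "P * P' = 1\<^sub>m N" and P'P: "P' * P = 1\<^sub>m (dim_row P')"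
    using Pinv Pc unfolding invertible_mat_def inverts_mat_def by auto
  have "dim_col (P' * P) = N" using Pc by simp
  then have rP': "dim_row P' = N" using P'P by simp
  have "dim_col (P * P') = N" using PP' by simp
  then have cP': "dim_col P' = N" by simp
  have P'c: "P' \<in> carrier_mat N N" using rP' cP' by auto
  have P'P1: "P' * P = 1\<^sub>m N" using P'P rP' by simp
  have rc: "\<rho> f \<in> carrier_mat N N" for f using rep unfolding is_rep_def N_def by blast
  have r1c: "\<rho>1 f \<in> carrier_mat n1 n1" for f using r1 unfolding is_rep_def by blast
  have r2c: "\<rho>2 f \<in> carrier_mat n2 n2" for f using r2 unfolding is_rep_def by blast
  define E :: "'k mat" where "E = four_block_mat (1\<^sub>m n1) (0\<^sub>m n1 n2) (0\<^sub>m n2 n1) (0\<^sub>m n2 n2)"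
  define D where "D f = rep_dsum n1 \<rho>1 n2 \<rho>2 f" for f
  have Ec: "E \<in> carrier_mat N N" unfolding E_def NN by simp
  have Dc: "D f \<in> carrier_mat N N" for f unfolding D_def rep_dsum_def NN using r1c r2c by simp
  have ED: "E * D f = D f * E" for f unfolding E_def D_def rep_dsum_def by (rule E_comm[OF r1c r2c])
  have EE: "E * E = E"
  proof -
    have "E * E = E * four_block_mat (1\<^sub>m n1) (0\<^sub>m n1 n2) (0\<^sub>m n2 n1) (0\<^sub>m n2 n2)" unfolding E_def ..
    also have "\<dots> = four_block_mat (1\<^sub>m n1 * 1\<^sub>m n1 + 0\<^sub>m n1 n2 * 0\<^sub>m n2 n1) (1\<^sub>m n1 * 0\<^sub>m n1 n2 + 0\<^sub>m n1 n2 * 0\<^sub>m n2 n2)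
        (0\<^sub>m n2 n1 * 1\<^sub>m n1 + 0\<^sub>m n2 n2 * 0\<^sub>m n2 n1) (0\<^sub>m n2 n1 * 0\<^sub>m n1 n2 + 0\<^sub>m n2 n2 * 0\<^sub>m n2 n2)"
      unfolding E_def by (rule mult_four_block_mat) auto
    also have "\<dots> = E" unfolding E_def by simp
    finally show ?thesis .
  qed
  have PD: "P * \<rho> f = D f * P" for f unfolding D_def by (rule Pint)
  have dims: "dim_row P = N" "dim_col P = N" "dim_row P' = N" "dim_col P' = N" "dim_row E = N" "dim_col E = N"
    "\<And>f. dim_row (D f) = N" "\<And>f. dim_col (D f) = N" "\<And>f. dim_row (\<rho> f) = N" "\<And>f. dim_col (\<rho> f) = N"
    using Pc P'c Ec Dc rc by auto
  have MP': "\<rho> f * P' = P' * D f" for f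
  proof -
    have "\<rho> f * P' = (P' * P) * \<rho> f * P'" by (simp add: P'P1 dims)
    also have "\<dots> = P' * (P * \<rho> f) * P'" by (simp only: assoc_mult_mat[OF P'c Pc rc[of f]])
    also have "\<dots> = P' * (D f * P) * P'" by (simp only: PD)
    also have "\<dots> = P' * D f * (P * P')" by (simp add: assoc_dim dims)
    also have "\<dots> = P' * D f" by (simp add: PP' dims)
    finally show ?thesis .
  qed
  define Q where "Q = P' * E * P"
  have Qc: "Q \<in> carrier_mat N N" unfolding Q_def using P'c Ec Pc by simp
  have Qcomm: "Q * \<rho> f = \<rho> f * Q" for f
  proof -
    have "Q * \<rho> f = P' * E * (P * \<rho> f)" unfolding Q_def by (simp add: assoc_dim dims)
    also have "\<dots> = P' * E * (D f * P)" by (simp only: PD)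
    also have "\<dots> = P' * (E * D f) * P" by (simp add: assoc_dim dims)
    also have "\<dots> = P' * (D f * E) * P" by (simp only: ED)
    also have "\<dots> = (P' * D f) * E * P" by (simp add: assoc_dim dims)
    also have "\<dots> = (\<rho> f * P') * E * P" by (simp only: MP')
    also have "\<dots> = \<rho> f * Q" unfolding Q_def by (simp add: assoc_dim dims)
    finally show ?thesis .
  qed
  have QQ: "Q * Q = Q"
  proof -
    have "Q * Q = P' * E * (P * P') * E * P" unfolding Q_def by (simp add: assoc_dim dims)
    also have "\<dots> = P' * (E * E) * P" by (simp add: PP' assoc_dim dims)
    also have "\<dots> = Q" unfolding Q_def by (simp only: EE)
    finally show ?thesis .
  qed
  have EQ: "E = P * Q * P'"
  proof -
    have "P * Q * P' = (P * P') * E * (P * P')" unfolding Q_def by (simp add: assoc_dim dims)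
    also have "\<dots> = E" by (simp add: PP' dims)
    finally show ?thesis by simp
  qed
  have QN: "Q \<in> carrier_mat (2*n+1) (2*n+1)" using Qc N_def by simp
  have cX: "Q * mk n 0 1 0 = mk n 0 1 0 * Q" using Qcomm[of fX] hX by simp
  have cY: "Q * mk n 0 0 1 = mk n 0 0 1 * Q" using Qcomm[of fY] hY by simp
  from idem[OF QN cX cY QQ] have "Q = 0\<^sub>m N N \<or> Q = 1\<^sub>m N" unfolding N_def .
  then show False
  proof
    assume "Q = 0\<^sub>m N N"
    then have "E = 0\<^sub>m N N" using EQ by (simp add: dims)
    moreover have "E $$ (0,0) = 1" unfolding E_def using n1 n2 by simp
    moreover have "0 < N" using NN n1 by simp
    ultimately show False by simp
  next
    assume "Q = 1\<^sub>m N"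
    then have "E = 1\<^sub>m N" using EQ by (simp add: PP' dims)
    moreover have "E $$ (n1,n1) = 0" unfolding E_def using n1 n2 by simp
    moreover have "n1 < N" using NN n2 by simp
    ultimately show False by simp
  qed
qed


lemma card4_obtain:
  assumes "card (UNIV :: 'x set) = 4"
  obtains a b c d :: "'x::finite" where "distinct [a,b,c,d]" "UNIV = {a,b,c,d}"
proof -
  have "card (UNIV::'x set) = Suc 3" using assms by simp
  then obtain a B where aB: "(UNIV::'x set) = insert a B" "a \<notin> B" "card B = 3"
    unfolding card_Suc_eq by blast
  then obtain x y z where xyz: "B = {x,y,z}" "x \<noteq> y" "y \<noteq> z" "x \<noteq> z"
    using card_3_iff[of B] by blast
  have "distinct [a,x,y,z]" using aB(2) xyz by simp
  moreover have "UNIV = {a,x,y,z}" using aB(1) xyz(1) by simp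
  ultimately show ?thesis by (rule that)
qed

lemma invertible_one: "invertible_mat (1\<^sub>m N :: 'k::field mat)"
  unfolding invertible_mat_def inverts_mat_def by (intro conjI exI[of _ "1\<^sub>m N"]) auto

lemma rep_iso_refl: "rep_iso n \<rho> n (\<rho> :: ('x::finite, 'k::field) malg \<Rightarrow> 'k mat)"
  if "is_rep n \<rho>"
proof -
  have c: "\<rho> f \<in> carrier_mat n n" for f using that unfolding is_rep_def by blast
  have "1\<^sub>m n * \<rho> f = \<rho> f * 1\<^sub>m n" for f
    using left_mult_one_mat[OF c[of f]] right_mult_one_mat[OF c[of f]] by simp
  then show ?thesis unfolding rep_iso_def
    by (intro conjI refl bexI[of _ "1\<^sub>m n"]) (auto simp: invertible_one)
qed

theorem theorem6:
  assumes "card (UNIV :: 'x::finite set) = 4"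
  shows "infinite_rep_type TYPE('x) TYPE('k::field)"
proof -
  obtain a b c d :: 'x where dist: "distinct [a,b,c,d]" and univ: "UNIV = {a,b,c,d}"
    using card4_obtain[OF assms] by blast
  define G :: "('x \<times> 'x) set set" where "G = {R. permr R}"
  define A where "A = orb (relP3 a b c d)"
  define B where "B = orb (relP1 a b c d)"
  have hG: "\<And>R S. R O S \<in> G \<longleftrightarrow> R \<in> G \<and> S \<in> G" unfolding G_def using permr_factor permr_comp by blast
  have hA: "\<And>R S. R O S \<in> A \<longleftrightarrow> (R \<in> G \<and> S \<in> A) \<or> (R \<in> A \<and> S \<in> G)"
    unfolding A_def G_def using orb_prod[OF prime3[OF dist univ]] by simp
  have hB: "\<And>R S. R O S \<in> B \<longleftrightarrow> (R \<in> G \<and> S \<in> B) \<or> (R \<in> B \<and> S \<in> G)"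
    unfolding B_def G_def using orb_prod[OF prime1[OF dist univ]] by simp
  have IdG: "Id \<in> G" unfolding G_def using permr_Id by simp
  have GA: "G \<inter> A = {}" unfolding G_def A_def using orb_not_perm[OF not_perm_P3[OF dist univ]] by blast
  have GB: "G \<inter> B = {}" unfolding G_def B_def using orb_not_perm[OF not_perm_P1[OF dist univ]] by blast
  have AB: "A \<inter> B = {}" unfolding A_def B_def by (rule orb_disj) (rule disj13[OF dist univ])
  have TA: "relP3 a b c d \<in> A" unfolding A_def by (rule orb_self)
  have TB: "relP1 a b c d \<in> B" unfolding B_def by (rule orb_self)
  define R where "R m = (rho m G A B :: ('x, 'k) malg \<Rightarrow> 'k mat)" for m
  have repR: "is_rep (2*m+1) (R m)" for m unfolding R_def by (rule is_rep_rho[OF hG hA hB IdG GA GB AB])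
  have indR: "indecomposable (2*m+1) (R m)" for m
  proof -
    have 1: "R m (\<lambda>S. if S = relP3 a b c d then 1 else 0) = mk m 0 1 0"
      unfolding R_def by (rule rho_ind[OF hG hA hB IdG GA GB AB TA])
    have 2: "R m (\<lambda>S. if S = relP1 a b c d then 1 else 0) = mk m 0 0 1"
      unfolding R_def by (rule rho_indB[OF hG hA hB IdG GA GB AB TB])
    show ?thesis by (rule indec_main[OF repR 1 2])
  qed
  define F where "F m = (iso_rel :: ((nat \<times> (('x, 'k) malg \<Rightarrow> 'k mat)) \<times> _) set) `` {(2*m+1, R m)}" for m
  have Fin: "F m \<in> indec_reps // iso_rel" for m
    unfolding F_def by (rule quotientI) (use indR[of m] in \<open>simp add: indec_reps_def\<close>)
  have injF: "inj F"
  proof (rule injI)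
    fix m m' assume "F m = F m'"
    have "(2*m+1, R m) \<in> F m" unfolding F_def iso_rel_def using rep_iso_refl[OF repR] by simp
    then have "(2*m+1, R m) \<in> F m'" using \<open>F m = F m'\<close> by simp
    then have "rep_iso (2*m'+1) (R m') (2*m+1) (R m)" unfolding F_def iso_rel_def by simp
    then show "m = m'" unfolding rep_iso_def by simp
  qed
  show ?thesis unfolding infinite_rep_type_def
  proof
    assume fin: "finite ((indec_reps :: (nat \<times> (('x, 'k) malg \<Rightarrow> 'k mat)) set) // iso_rel)"
    have "finite (UNIV :: nat set)"
      by (rule inj_on_finite[OF injF _ fin]) (use Fin in auto)
    then show False by simp
  qed
qed

end
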